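(* Let $\mathfrak{g}$ be a finite-dimensional real Lie algebra. A star-product $\star$ on $\mathfrak{g}^*$ satisfying property (P1) is entirely determined by the products $(X)^n\star Y$, where $X,Y$ range over $\mathfrak{g}$ and $n$ over $\mathbb{N}$. That is, if $\star$ and $\star'$ are two star-products on $\mathfrak{g}^*$ both satisfying (P1) and $(X)^n\star Y=(X)^n\star' Y$ for all $X,Y\in\mathfrak{g}$ and all $n\in\mathbb{N}$, then $\star=\star'$.
   Context: Elements of $\mathfrak{g}$ are regarded as linear functions on $\mathfrak{g}^*$, and $(X)^n$ denotes the $n$-th pointwise power of $X$, an element of $S^n(\mathfrak{g})$ (polynomial functions on $\mathfrak{g}^*$). With $[X^i,X^j]=c_k^{ij}X^k$ in a basis $X^1,\dots,X^d$, the linear Poisson bracket is $\{a,b\}=c_k^{ij}X^k\partial_ia\,\partial_jb$. A star-product on $\mathfrak{g}^*$ is an $\mathbb{R}[[\epsilon]]$-bilinear associative product $a\star b=\sum_{j\ge0}\epsilon^j\Pi_j(a,b)$ on $C^\infty(\mathfrak{g}^* )[[\epsilon]]$ with bi-differential $\Pi_j$, $\Pi_0(a,b)=ab$ and $\Pi_1(a,b)-\Pi_1(b,a)=\{a,b\}$. Property (P1): for polynomials $p_n,q_m$ of degrees $n,m$, $p_n\star q_m=p_nq_m+r$ with $r$ a polynomial (coefficients in $\mathbb{R}[[\epsilon]]$) of degree at most $m+n-1$. *)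

theory Defs
  imports "HOL-Analysis.Analysis"
begin

text \<open>
  Setting: a finite-dimensional real Lie algebra g with basis X^i indexed by the finite
  type 'n, structure constants [X^i,X^j] = sum_k c i j k X^k.  The dual g* is identified
  with real^'n via the dual basis, so X^i is the coordinate function x |-> x$i and a
  general element of g (coefficient vector a) is the linear function x |-> a . x.
\<close>

definition lie_structure :: "('n::finite \<Rightarrow> 'n \<Rightarrow> 'n \<Rightarrow> real) \<Rightarrow> bool" where
  "lie_structure c \<longleftrightarrow>
     (\<forall>i j k. c i j k = - c j i k) \<and>
     (\<forall>i j l m. (\<Sum>k\<in>UNIV. c i j k * c k l m + c j l k * c k i m + c l i k * c k j m) = 0)"

definition partial :: "'n::finite \<Rightarrow> (real^'n \<Rightarrow> real) \<Rightarrow> real^'n \<Rightarrow> real" where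
  "partial i f x = deriv (\<lambda>t. f (x + t *\<^sub>R axis i 1)) 0"

definition dop :: "'n::finite list \<Rightarrow> (real^'n \<Rightarrow> real) \<Rightarrow> real^'n \<Rightarrow> real" where
  "dop u f = fold partial u f"

definition smooth :: "(real^'n::finite \<Rightarrow> real) \<Rightarrow> bool" where
  "smooth f \<longleftrightarrow> (\<forall>u. continuous_on UNIV (dop u f) \<and>
      (\<forall>i x. (\<lambda>t. dop u f (x + t *\<^sub>R axis i 1)) differentiable (at 0)))"

definition bidiff :: "((real^'n::finite \<Rightarrow> real) \<Rightarrow> (real^'n \<Rightarrow> real) \<Rightarrow> real^'n \<Rightarrow> real) \<Rightarrow> bool" where
  "bidiff P \<longleftrightarrow> (\<exists>S coef. finite (S :: ('n list \<times> 'n list) set) \<and> (\<forall>p\<in>S. smooth (coef p)) \<and>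
      (\<forall>f g. smooth f \<longrightarrow> smooth g \<longrightarrow>
         P f g = (\<lambda>x. \<Sum>(u,v)\<in>S. coef (u,v) x * dop u f x * dop v g x)))"

definition poisson :: "('n::finite \<Rightarrow> 'n \<Rightarrow> 'n \<Rightarrow> real) \<Rightarrow> (real^'n \<Rightarrow> real) \<Rightarrow> (real^'n \<Rightarrow> real) \<Rightarrow> real^'n \<Rightarrow> real" where
  "poisson c a b = (\<lambda>x. \<Sum>i\<in>UNIV. \<Sum>j\<in>UNIV. \<Sum>k\<in>UNIV. c i j k * x$k * partial i a x * partial j b x)"

text \<open>Elements of C^infinity(g*)[[eps]] are coefficient sequences; the R[[eps]]-bilinear
  extension of a*b = sum_j eps^j Pi_j(a,b).\<close>

definition star :: "(nat \<Rightarrow> (real^'n::finite \<Rightarrow> real) \<Rightarrow> (real^'n \<Rightarrow> real) \<Rightarrow> real^'n \<Rightarrow> real)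
     \<Rightarrow> (nat \<Rightarrow> real^'n \<Rightarrow> real) \<Rightarrow> (nat \<Rightarrow> real^'n \<Rightarrow> real) \<Rightarrow> nat \<Rightarrow> real^'n \<Rightarrow> real" where
  "star Pr A B = (\<lambda>k x. \<Sum>i\<le>k. \<Sum>j\<le>k - i. Pr i (A j) (B (k - i - j)) x)"

definition star_product :: "('n::finite \<Rightarrow> 'n \<Rightarrow> 'n \<Rightarrow> real)
     \<Rightarrow> (nat \<Rightarrow> (real^'n \<Rightarrow> real) \<Rightarrow> (real^'n \<Rightarrow> real) \<Rightarrow> real^'n \<Rightarrow> real) \<Rightarrow> bool" where
  "star_product c Pr \<longleftrightarrow>
     (\<forall>j. bidiff (Pr j)) \<and>
     (\<forall>a b. smooth a \<longrightarrow> smooth b \<longrightarrow> Pr 0 a b = (\<lambda>x. a x * b x)) \<and>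
     (\<forall>a b. smooth a \<longrightarrow> smooth b \<longrightarrow> (\<lambda>x. Pr 1 a b x - Pr 1 b a x) = poisson c a b) \<and>
     (\<forall>A B C. (\<forall>k. smooth (A k)) \<longrightarrow> (\<forall>k. smooth (B k)) \<longrightarrow> (\<forall>k. smooth (C k)) \<longrightarrow>
        star Pr (star Pr A B) C = star Pr A (star Pr B C))"

definition poly_le :: "int \<Rightarrow> (real^'n::finite \<Rightarrow> real) \<Rightarrow> bool" where
  "poly_le k p \<longleftrightarrow> (\<exists>coef :: ('n \<Rightarrow> nat) \<Rightarrow> real.
      p = (\<lambda>x. \<Sum>\<alpha>\<in>{\<alpha>. int (\<Sum>i\<in>UNIV. \<alpha> i) \<le> k}. coef \<alpha> * (\<Prod>i\<in>UNIV. (x$i) ^ \<alpha> i)))"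

definition poly_deg :: "nat \<Rightarrow> (real^'n::finite \<Rightarrow> real) \<Rightarrow> bool" where
  "poly_deg n p \<longleftrightarrow> poly_le (int n) p \<and> \<not> poly_le (int n - 1) p"

text \<open>(P1): p_n * q_m = p_n q_m + r, r a polynomial of degree at most n+m-1 with
  coefficients in R[[eps]], i.e. every eps-coefficient of r has degree at most n+m-1.\<close>

definition P1 :: "(nat \<Rightarrow> (real^'n::finite \<Rightarrow> real) \<Rightarrow> (real^'n \<Rightarrow> real) \<Rightarrow> real^'n \<Rightarrow> real) \<Rightarrow> bool" where
  "P1 Pr \<longleftrightarrow> (\<forall>p q n m. poly_deg n p \<longrightarrow> poly_deg m q \<longrightarrow>
      (\<forall>j. poly_le (int n + int m - 1)
             (\<lambda>x. Pr j p q x - (if j = 0 then p x * q x else 0))))"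

end

theory Submission
  imports Defs
begin

definition linedf :: "(real^'n::finite \<Rightarrow> real) \<Rightarrow> bool" where
  "linedf h \<longleftrightarrow> (\<forall>x i. (\<lambda>t. h (x + t *\<^sub>R axis i 1)) differentiable (at 0))"

lemma linedf_deriv:
  assumes "linedf h"
  shows "((\<lambda>t. h (y + t *\<^sub>R axis k 1)) has_real_derivative partial k h (y + s *\<^sub>R axis k 1)) (at s)"
proof -
  let ?z = "y + s *\<^sub>R axis k 1"
  have d: "(\<lambda>r. h (?z + r *\<^sub>R axis k 1)) differentiable (at 0)" using assms linedf_def by blast
  have "((\<lambda>r. h (?z + r *\<^sub>R axis k 1)) has_real_derivative partial k h ?z) (at 0)"
    using d DERIV_deriv_iff_real_differentiable partial_def by metis
  hence "((\<lambda>r. h (?z + r *\<^sub>R axis k 1)) has_real_derivative partial k h ?z) (at (s + (-s)))" by simp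
  hence "((\<lambda>t. h (?z + (t + (-s)) *\<^sub>R axis k 1)) has_real_derivative partial k h ?z) (at s)"
    by (subst (asm) DERIV_shift) simp
  moreover have "(\<lambda>t. h (?z + (t + (-s)) *\<^sub>R axis k 1)) = (\<lambda>t. h (y + t *\<^sub>R axis k 1))"
    by (rule ext) (simp add: algebra_simps)
  ultimately show ?thesis by simp
qed

lemma linedf_partial_eq:
  assumes "((\<lambda>t. h (x + t *\<^sub>R axis k 1)) has_real_derivative D) (at 0)"
  shows "partial k h x = D"
  using assms partial_def DERIV_imp_deriv by metis

lemma linedf_add: "linedf f \<Longrightarrow> linedf g \<Longrightarrow> linedf (\<lambda>x. f x + g x)"
  unfolding linedf_def by (simp add: differentiable_add)

lemma linedf_scale: "linedf f \<Longrightarrow> linedf (\<lambda>x. c * f x)"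
  unfolding linedf_def by (simp add: differentiable_mult)

lemma linedf_zero: "linedf (\<lambda>x. 0)"
  unfolding linedf_def by auto

lemma partial_add:
  assumes "linedf f" "linedf g"
  shows "partial i (\<lambda>x. f x + g x) = (\<lambda>x. partial i f x + partial i g x)"
proof
  fix x
  have "((\<lambda>t. f (x + t *\<^sub>R axis i 1) + g (x + t *\<^sub>R axis i 1)) has_real_derivative
      partial i f (x + 0 *\<^sub>R axis i 1) + partial i g (x + 0 *\<^sub>R axis i 1)) (at 0)"
    by (intro derivative_intros linedf_deriv assms)
  thus "partial i (\<lambda>x. f x + g x) x = partial i f x + partial i g x"
    by (intro linedf_partial_eq) simp
qed

lemma partial_scale:
  assumes "linedf f"
  shows "partial i (\<lambda>x. c * f x) = (\<lambda>x. c * partial i f x)"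
proof
  fix x
  have "((\<lambda>t. c * f (x + t *\<^sub>R axis i 1)) has_real_derivative
      c * partial i f (x + 0 *\<^sub>R axis i 1)) (at 0)"
    by (rule DERIV_cmult, rule linedf_deriv[OF assms])
  thus "partial i (\<lambda>x. c * f x) x = c * partial i f x"
    by (intro linedf_partial_eq) simp
qed

lemma partial_zero: "partial i (\<lambda>x. 0) = (\<lambda>x. 0)"
  by (rule ext, rule linedf_partial_eq) simp

lemma dop_Nil[simp]: "dop [] f = f" by (simp add: dop_def)
lemma dop_Cons[simp]: "dop (i # u) f = dop u (partial i f)" by (simp add: dop_def)
lemma dop_append: "dop (u @ v) f = dop v (dop u f)" by (simp add: dop_def)

definition sm :: "(real^'n::finite \<Rightarrow> real) \<Rightarrow> bool" where
  "sm f \<longleftrightarrow> (\<forall>u. linedf (dop u f))"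

lemma smooth_sm: "smooth f \<Longrightarrow> sm f"
  unfolding smooth_def sm_def linedf_def by blast

lemma sm_partial: "sm f \<Longrightarrow> sm (partial i f)"
  unfolding sm_def by (metis dop_Cons)

lemma sm_linedf: "sm f \<Longrightarrow> linedf f"
  unfolding sm_def by (metis dop_Nil)

lemma dop_add_sm1:
  "sm f \<Longrightarrow> sm g \<Longrightarrow> dop u (\<lambda>x. f x + g x) = (\<lambda>x. dop u f x + dop u g x)"
proof (induction u arbitrary: f g)
  case Nil then show ?case by simp
next
  case (Cons i u)
  have "dop (i # u) (\<lambda>x. f x + g x) = dop u (\<lambda>x. partial i f x + partial i g x)"
    using Cons.prems by (simp add: partial_add sm_linedf)
  also have "\<dots> = (\<lambda>x. dop u (partial i f) x + dop u (partial i g) x)"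
    using Cons by (simp add: sm_partial)
  finally show ?case by simp
qed

lemma dop_add_sm:
  assumes "sm f" "sm g"
  shows "dop u (\<lambda>x. f x + g x) = (\<lambda>x. dop u f x + dop u g x) \<and> sm (\<lambda>x. f x + g x)"
proof
  show "dop u (\<lambda>x. f x + g x) = (\<lambda>x. dop u f x + dop u g x)" by (rule dop_add_sm1[OF assms])
  show "sm (\<lambda>x. f x + g x)" unfolding sm_def
  proof
    fix v
    have "linedf (\<lambda>x. dop v f x + dop v g x)" using assms unfolding sm_def by (simp add: linedf_add)
    thus "linedf (dop v (\<lambda>x. f x + g x))" by (simp only: dop_add_sm1[OF assms])
  qed
qed

lemma dop_scale_sm1:
  "sm f \<Longrightarrow> dop u (\<lambda>x. c * f x) = (\<lambda>x. c * dop u f x)"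
proof (induction u arbitrary: f)
  case Nil then show ?case by simp
next
  case (Cons i u)
  have "dop (i # u) (\<lambda>x. c * f x) = dop u (\<lambda>x. c * partial i f x)"
    using Cons.prems by (simp add: partial_scale sm_linedf)
  also have "\<dots> = (\<lambda>x. c * dop u (partial i f) x)"
    using Cons by (simp add: sm_partial)
  finally show ?case by simp
qed

lemma dop_scale_sm:
  assumes "sm f"
  shows "dop u (\<lambda>x. c * f x) = (\<lambda>x. c * dop u f x) \<and> sm (\<lambda>x. c * f x)"
proof
  show "dop u (\<lambda>x. c * f x) = (\<lambda>x. c * dop u f x)" by (rule dop_scale_sm1[OF assms])
  show "sm (\<lambda>x. c * f x)" unfolding sm_def
  proof
    fix v
    have "linedf (\<lambda>x. c * dop v f x)" using assms unfolding sm_def by (simp add: linedf_scale)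
    thus "linedf (dop v (\<lambda>x. c * f x))" by (simp only: dop_scale_sm1[OF assms])
  qed
qed

lemma dop_zero: "dop u (\<lambda>x. 0) = (\<lambda>x. 0)"
  by (induction u) (simp_all add: partial_zero)

lemma smooth_add:
  assumes "smooth f" "smooth g" shows "smooth (\<lambda>x. f x + g x)"
  unfolding smooth_def
proof
  fix u
  have e: "dop u (\<lambda>x. f x + g x) = (\<lambda>x. dop u f x + dop u g x)"
    by (rule dop_add_sm1[OF smooth_sm smooth_sm]) (use assms in auto)
  have "continuous_on UNIV (\<lambda>x. dop u f x + dop u g x)"
    using assms unfolding smooth_def by (intro continuous_on_add) auto
  moreover have "linedf (\<lambda>x. dop u f x + dop u g x)"
    using assms unfolding smooth_def linedf_def by (intro linedf_add[unfolded linedf_def]) auto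
  ultimately show "continuous_on UNIV (dop u (\<lambda>x. f x + g x)) \<and>
    (\<forall>i x. (\<lambda>t. dop u (\<lambda>x. f x + g x) (x + t *\<^sub>R axis i 1)) differentiable at 0)"
    unfolding e linedf_def by blast
qed

lemma smooth_scale:
  assumes "smooth f" shows "smooth (\<lambda>x. c * f x)"
  unfolding smooth_def
proof
  fix u
  have e: "dop u (\<lambda>x. c * f x) = (\<lambda>x. c * dop u f x)"
    by (rule dop_scale_sm1[OF smooth_sm]) (use assms in auto)
  have "continuous_on UNIV (\<lambda>x. c * dop u f x)"
    using assms unfolding smooth_def by (intro continuous_on_mult_left) auto
  moreover have "linedf (\<lambda>x. c * dop u f x)"
    using assms unfolding smooth_def linedf_def by (intro linedf_scale[unfolded linedf_def]) auto
  ultimately show "continuous_on UNIV (dop u (\<lambda>x. c * f x)) \<and>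
    (\<forall>i x. (\<lambda>t. dop u (\<lambda>x. c * f x) (x + t *\<^sub>R axis i 1)) differentiable at 0)"
    unfolding e linedf_def by blast
qed

lemma smooth_zero: "smooth (\<lambda>x. 0)"
  unfolding smooth_def by (simp add: dop_zero)

lemma smooth_sum: "finite A \<Longrightarrow> (\<And>a. a \<in> A \<Longrightarrow> smooth (F a)) \<Longrightarrow> smooth (\<lambda>x. \<Sum>a\<in>A. c a * F a x)"
proof (induction A rule: finite_induct)
  case empty then show ?case by (simp add: smooth_zero)
next
  case (insert a A)
  have "smooth (\<lambda>x. c a * F a x + (\<Sum>a\<in>A. c a * F a x))"
    by (rule smooth_add, rule smooth_scale) (use insert in auto)
  then show ?case using insert by simp
qed

lemma dop_sum_smooth: "finite A \<Longrightarrow> (\<And>a. a \<in> A \<Longrightarrow> smooth (F a)) \<Longrightarrow>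
   dop u (\<lambda>x. \<Sum>a\<in>A. c a * F a x) = (\<lambda>x. \<Sum>a\<in>A. c a * dop u (F a) x)"
proof (induction A rule: finite_induct)
  case empty then show ?case by (simp add: dop_zero)
next
  case (insert a A)
  have s1: "sm (\<lambda>x. c a * F a x)" using dop_scale_sm smooth_sm insert by blast
  have s2: "sm (\<lambda>x. \<Sum>a\<in>A. c a * F a x)" using smooth_sm smooth_sum insert by blast
  have e: "dop u (\<lambda>x. c a * F a x) = (\<lambda>x. c a * dop u (F a) x)"
    using dop_scale_sm1[OF smooth_sm] insert by blast
  show ?case using insert dop_add_sm[OF s1 s2] e by simp
qed

lemma smooth_dop: "smooth f \<Longrightarrow> smooth (dop u f)"
  unfolding smooth_def dop_append[symmetric] by blast

lemma smooth_partial: "smooth f \<Longrightarrow> smooth (partial i f)"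
  using smooth_dop[of f "[i]"] by simp


definition cmon :: "real^'n::finite \<Rightarrow> ('n \<Rightarrow> nat) \<Rightarrow> real^'n \<Rightarrow> real" where
  "cmon c \<alpha> = (\<lambda>x. \<Prod>i\<in>UNIV. (x$i - c$i) ^ \<alpha> i)"

definition mon :: "('n::finite \<Rightarrow> nat) \<Rightarrow> real^'n \<Rightarrow> real" where
  "mon \<alpha> = (\<lambda>x. \<Prod>i\<in>UNIV. (x$i) ^ \<alpha> i)"

lemma mon_cmon: "mon \<alpha> = cmon 0 \<alpha>"
  by (simp add: mon_def cmon_def)

lemma prod_split_at:
  fixes F :: "'n::finite \<Rightarrow> real"
  shows "(\<Prod>i\<in>UNIV. F i) = F k * (\<Prod>i\<in>UNIV-{k}. F i)"
  by (simp add: prod.remove)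

lemma prod_upd_rest:
  fixes g :: "'n::finite \<Rightarrow> nat \<Rightarrow> real"
  shows "(\<Prod>i\<in>UNIV-{k}. g i ((\<alpha>(k := n)) i)) = (\<Prod>i\<in>UNIV-{k}. g i (\<alpha> i))"
  by (rule prod.cong) auto

lemma cmon_line_deriv:
  "((\<lambda>t. cmon c \<alpha> (x + t *\<^sub>R axis k 1)) has_real_derivative
      (of_nat (\<alpha> k) * cmon c (\<alpha>(k := \<alpha> k - 1)) x)) (at 0)"
proof -
  let ?R = "\<Prod>i\<in>UNIV-{k}. (x$i - c$i) ^ \<alpha> i"
  have e: "(\<lambda>t. cmon c \<alpha> (x + t *\<^sub>R axis k 1)) = (\<lambda>t. (x$k + t - c$k) ^ \<alpha> k * ?R)"
  proof
    fix t
    have "cmon c \<alpha> (x + t *\<^sub>R axis k 1) = ((x + t *\<^sub>R axis k 1)$k - c$k) ^ \<alpha> k *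
        (\<Prod>i\<in>UNIV-{k}. ((x + t *\<^sub>R axis k 1)$i - c$i) ^ \<alpha> i)"
      unfolding cmon_def by (rule prod_split_at)
    also have "(\<Prod>i\<in>UNIV-{k}. ((x + t *\<^sub>R axis k 1)$i - c$i) ^ \<alpha> i) = ?R"
      by (rule prod.cong) (auto simp: axis_def)
    finally show "cmon c \<alpha> (x + t *\<^sub>R axis k 1) = (x$k + t - c$k) ^ \<alpha> k * ?R"
      by (simp add: axis_def)
  qed
  have d: "((\<lambda>t. (x$k + t - c$k) ^ \<alpha> k * ?R) has_real_derivative
      (of_nat (\<alpha> k) * (x$k + 0 - c$k) ^ (\<alpha> k - 1) * 1) * ?R) (at 0)"
    by (intro derivative_eq_intros) auto
  have r: "of_nat (\<alpha> k) * cmon c (\<alpha>(k := \<alpha> k - 1)) x = (of_nat (\<alpha> k) * (x$k + 0 - c$k) ^ (\<alpha> k - 1) * 1) * ?R"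
  proof -
    have "cmon c (\<alpha>(k := \<alpha> k - 1)) x = (x$k - c$k) ^ (\<alpha> k - 1) * (\<Prod>i\<in>UNIV-{k}. (x$i - c$i) ^ ((\<alpha>(k := \<alpha> k - 1)) i))"
      unfolding cmon_def by (subst prod_split_at[of _ k]) simp
    also have "\<dots> = (x$k - c$k) ^ (\<alpha> k - 1) * ?R"
      using prod_upd_rest[where g="\<lambda>i n. (x$i - c$i) ^ n" and k=k and \<alpha>=\<alpha>] by simp
    finally show ?thesis by simp
  qed
  show ?thesis unfolding e r by (rule d)
qed

lemma partial_cmon: "partial k (cmon c \<alpha>) = (\<lambda>x. of_nat (\<alpha> k) * cmon c (\<alpha>(k := \<alpha> k - 1)) x)"
  by (rule ext, rule linedf_partial_eq, rule cmon_line_deriv)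

lemma linedf_cmon: "linedf (cmon c \<alpha>)"
  unfolding linedf_def using cmon_line_deriv real_differentiable_def by blast

lemma dop_cmon_ex: "\<exists>b \<beta>. dop u (\<lambda>x. a * cmon c \<alpha> x) = (\<lambda>x. b * cmon c \<beta> x)"
proof (induction u arbitrary: a \<alpha>)
  case Nil then show ?case by auto
next
  case (Cons k u)
  have "partial k (\<lambda>x. a * cmon c \<alpha> x) = (\<lambda>x. (a * of_nat (\<alpha> k)) * cmon c (\<alpha>(k := \<alpha> k - 1)) x)"
    by (simp add: partial_scale linedf_cmon partial_cmon mult.assoc)
  then show ?case using Cons by simp
qed

lemma smooth_cmon: "smooth (cmon c \<alpha>)"
  unfolding smooth_def
proof
  fix u
  obtain b \<beta> where e: "dop u (\<lambda>x. 1 * cmon c \<alpha> x) = (\<lambda>x. b * cmon c \<beta> x)"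
    using dop_cmon_ex by blast
  have e': "dop u (cmon c \<alpha>) = (\<lambda>x. b * cmon c \<beta> x)" using e by simp
  have "continuous_on UNIV (\<lambda>x. b * cmon c \<beta> x)"
    unfolding cmon_def by (intro continuous_intros)
  moreover have "linedf (\<lambda>x. b * cmon c \<beta> x)" by (intro linedf_scale linedf_cmon)
  ultimately show "continuous_on UNIV (dop u (cmon c \<alpha>)) \<and>
    (\<forall>i x. (\<lambda>t. dop u (cmon c \<alpha>) (x + t *\<^sub>R axis i 1)) differentiable at 0)"
    unfolding e' linedf_def by blast
qed

lemma smooth_mon: "smooth (mon \<alpha>)"
  by (simp add: mon_cmon smooth_cmon)

definition cnt :: "'n list \<Rightarrow> 'n \<Rightarrow> nat" where
  "cnt u = (\<lambda>i. count (mset u) i)"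

lemma cmon_at_c: "cmon c \<alpha> c = (if \<alpha> = (\<lambda>_. 0) then 1 else 0)"
proof (cases "\<alpha> = (\<lambda>_. 0)")
  case True then show ?thesis by (simp add: cmon_def)
next
  case False
  then obtain k where "\<alpha> k \<noteq> 0" by auto
  then show ?thesis using False unfolding cmon_def
    by (subst prod_split_at[of _ k]) simp
qed

lemma dop_cmon_at_c:
  "dop u (cmon c \<alpha>) c = (if cnt u = \<alpha> then (\<Prod>i\<in>UNIV. fact (\<alpha> i)) else 0)"
proof (induction u arbitrary: \<alpha>)
  case Nil then show ?case by (simp add: cnt_def cmon_at_c)
next
  case (Cons k u)
  let ?\<alpha>' = "\<alpha>(k := \<alpha> k - 1)"
  have "dop (k # u) (cmon c \<alpha>) c = dop u (\<lambda>x. of_nat (\<alpha> k) * cmon c ?\<alpha>' x) c"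
    by (simp add: partial_cmon)
  also have "\<dots> = of_nat (\<alpha> k) * dop u (cmon c ?\<alpha>') c"
    by (simp add: dop_scale_sm1[OF smooth_sm[OF smooth_cmon]])
  also have "\<dots> = of_nat (\<alpha> k) * (if cnt u = ?\<alpha>' then (\<Prod>i\<in>UNIV. fact (?\<alpha>' i)) else 0)"
    by (simp only: Cons.IH)
  also have "\<dots> = (if cnt (k # u) = \<alpha> then (\<Prod>i\<in>UNIV. fact (\<alpha> i)) else 0)"
  proof (cases "\<alpha> k = 0")
    case True
    have "cnt (k # u) \<noteq> \<alpha>" using True by (auto simp: cnt_def dest: fun_cong[of _ _ k])
    then show ?thesis using True by simp
  next
    case False
    have iff: "cnt (k # u) = \<alpha> \<longleftrightarrow> cnt u = ?\<alpha>'"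
    proof
      assume "cnt (k # u) = \<alpha>"
      then show "cnt u = ?\<alpha>'" by (auto simp: cnt_def fun_eq_iff split: if_splits)
    next
      assume a: "cnt u = ?\<alpha>'"
      show "cnt (k # u) = \<alpha>"
      proof
        fix i show "cnt (k # u) i = \<alpha> i"
          using a False by (cases "i = k") (auto simp: cnt_def fun_eq_iff dest: fun_cong[of _ _ i])
      qed
    qed
    have pf: "(\<Prod>i\<in>UNIV. fact (\<alpha> i)) = (of_nat (\<alpha> k) * (\<Prod>i\<in>UNIV. fact (?\<alpha>' i)) :: real)"
    proof -
      have "(\<Prod>i\<in>UNIV. fact (\<alpha> i)) = (fact (\<alpha> k) * (\<Prod>i\<in>UNIV-{k}. fact (\<alpha> i)) :: real)"
        by (rule prod_split_at)
      also have "fact (\<alpha> k) = (of_nat (\<alpha> k) * fact (\<alpha> k - 1) :: real)"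
        using False by (metis fact_nonzero fact_num_eq_if of_nat_fact)
      also have "(\<Prod>i\<in>UNIV-{k}. fact (\<alpha> i)) = (\<Prod>i\<in>UNIV-{k}. fact (?\<alpha>' i) :: real)"
        by (rule prod.cong) auto
      also have "(\<Prod>i\<in>UNIV. fact (?\<alpha>' i)) = (fact (?\<alpha>' k) * (\<Prod>i\<in>UNIV-{k}. fact (?\<alpha>' i)) :: real)"
        by (rule prod_split_at)
      ultimately show ?thesis by simp
    qed
    show ?thesis using iff pf by simp
  qed
  finally show ?case .
qed


definition Ak :: "int \<Rightarrow> ('n::finite \<Rightarrow> nat) set" where
  "Ak k = {\<alpha>. int (\<Sum>i\<in>UNIV. \<alpha> i) \<le> k}"

lemma poly_le_alt: "poly_le k p \<longleftrightarrow> (\<exists>coef. p = (\<lambda>x. \<Sum>\<alpha>\<in>Ak k. coef \<alpha> * mon \<alpha> x))"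
  by (simp add: poly_le_def mon_def Ak_def)

lemma finite_Ak: "finite (Ak k :: ('n::finite \<Rightarrow> nat) set)"
proof -
  have "Ak k \<subseteq> PiE UNIV (\<lambda>_::'n. {0..nat k})"
  proof
    fix \<alpha> :: "'n \<Rightarrow> nat" assume a: "\<alpha> \<in> Ak k"
    have "\<alpha> i \<le> nat k" for i
    proof -
      have "\<alpha> i \<le> (\<Sum>i\<in>UNIV. \<alpha> i)" by (rule member_le_sum) auto
      hence "int (\<alpha> i) \<le> int (\<Sum>i\<in>UNIV. \<alpha> i)" by (simp only: of_nat_le_iff)
      moreover have "int (\<Sum>i\<in>UNIV. \<alpha> i) \<le> k" using a unfolding Ak_def by blast
      ultimately have "int (\<alpha> i) \<le> k" by linarith
      thus ?thesis by (metis nat_int nat_mono)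
    qed
    thus "\<alpha> \<in> PiE UNIV (\<lambda>_. {0..nat k})" by (auto simp: PiE_UNIV_domain)
  qed
  moreover have "finite (PiE UNIV (\<lambda>_::'n. {0..nat k}))" by (intro finite_PiE) auto
  ultimately show ?thesis by (rule finite_subset)
qed

lemma Ak_mono: "k \<le> k' \<Longrightarrow> Ak k \<subseteq> Ak k'"
  unfolding Ak_def by auto

lemma Ak_neg: "k < 0 \<Longrightarrow> Ak k = {}"
  unfolding Ak_def by (auto simp del: of_nat_sum)

lemma Ak_0: "Ak 0 = {\<lambda>_. 0}"
  unfolding Ak_def by (auto simp: fun_eq_iff simp del: of_nat_sum)

lemma poly_le_mono: assumes "k \<le> k'" "poly_le k p" shows "poly_le k' p"
proof -
  obtain coef where p: "p = (\<lambda>x. \<Sum>\<alpha>\<in>Ak k. coef \<alpha> * mon \<alpha> x)" using assms poly_le_alt by blast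
  have "p = (\<lambda>x. \<Sum>\<alpha>\<in>Ak k'. (if \<alpha> \<in> Ak k then coef \<alpha> else 0) * mon \<alpha> x)"
  proof
    fix x
    have "(\<Sum>\<alpha>\<in>Ak k'. (if \<alpha> \<in> Ak k then coef \<alpha> else 0) * mon \<alpha> x) = (\<Sum>\<alpha>\<in>Ak k. (if \<alpha> \<in> Ak k then coef \<alpha> else 0) * mon \<alpha> x)"
      by (rule sum.mono_neutral_right) (use finite_Ak Ak_mono[OF assms(1)] in auto)
    thus "p x = (\<Sum>\<alpha>\<in>Ak k'. (if \<alpha> \<in> Ak k then coef \<alpha> else 0) * mon \<alpha> x)" by (simp add: p)
  qed
  thus ?thesis unfolding poly_le_alt by (rule exI[of _ "\<lambda>\<alpha>. if \<alpha> \<in> Ak k then coef \<alpha> else 0", rotated])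
qed

lemma poly_le_add: assumes "poly_le k p" "poly_le k q" shows "poly_le k (\<lambda>x. p x + q x)"
proof -
  obtain c1 where p: "p = (\<lambda>x. \<Sum>\<alpha>\<in>Ak k. c1 \<alpha> * mon \<alpha> x)" using assms poly_le_alt by blast
  obtain c2 where q: "q = (\<lambda>x. \<Sum>\<alpha>\<in>Ak k. c2 \<alpha> * mon \<alpha> x)" using assms poly_le_alt by blast
  have "(\<lambda>x. p x + q x) = (\<lambda>x. \<Sum>\<alpha>\<in>Ak k. (c1 \<alpha> + c2 \<alpha>) * mon \<alpha> x)"
    by (simp add: p q sum.distrib algebra_simps)
  thus ?thesis unfolding poly_le_alt by (rule exI[of _ "\<lambda>\<alpha>. c1 \<alpha> + c2 \<alpha>", rotated])
qed

lemma poly_le_scale: assumes "poly_le k p" shows "poly_le k (\<lambda>x. a * p x)"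
proof -
  obtain c1 where p: "p = (\<lambda>x. \<Sum>\<alpha>\<in>Ak k. c1 \<alpha> * mon \<alpha> x)" using assms poly_le_alt by blast
  have "(\<lambda>x. a * p x) = (\<lambda>x. \<Sum>\<alpha>\<in>Ak k. (a * c1 \<alpha>) * mon \<alpha> x)"
    by (simp add: p sum_distrib_left algebra_simps)
  thus ?thesis unfolding poly_le_alt by (rule exI[of _ "\<lambda>\<alpha>. a * c1 \<alpha>", rotated])
qed

lemma poly_le_zero: "poly_le k (\<lambda>x. 0)"
  unfolding poly_le_alt by (rule exI[of _ "\<lambda>_. 0"]) simp

lemma poly_le_neg: "k < 0 \<Longrightarrow> poly_le k p \<Longrightarrow> p = (\<lambda>x. 0)"
  unfolding poly_le_alt by (auto simp: Ak_neg)

lemma poly_le_0: "poly_le 0 p \<Longrightarrow> \<exists>a. p = (\<lambda>x. a)"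
  unfolding poly_le_alt by (auto simp: Ak_0 mon_def)

lemma poly_le_const: "poly_le 0 (\<lambda>x. a)"
  unfolding poly_le_alt by (rule exI[of _ "\<lambda>_. a"]) (simp add: Ak_0 mon_def)

lemma poly_le_mon: "poly_le (int (\<Sum>i\<in>UNIV. \<alpha> i)) (mon \<alpha>)"
proof -
  have m: "\<alpha> \<in> Ak (int (\<Sum>i\<in>UNIV. \<alpha> i))" by (simp add: Ak_def del: of_nat_sum)
  have "mon \<alpha> = (\<lambda>x. \<Sum>\<beta>\<in>Ak (int (\<Sum>i\<in>UNIV. \<alpha> i)). (if \<beta> = \<alpha> then 1 else 0) * mon \<beta> x)"
  proof
    fix x
    have "(\<Sum>\<beta>\<in>Ak (int (\<Sum>i\<in>UNIV. \<alpha> i)). (if \<beta> = \<alpha> then 1 else 0) * mon \<beta> x)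
        = (\<Sum>\<beta>\<in>Ak (int (\<Sum>i\<in>UNIV. \<alpha> i)). if \<beta> = \<alpha> then mon \<alpha> x else 0)"
      by (rule sum.cong) auto
    also have "\<dots> = mon \<alpha> x" by (rule trans[OF sum.delta[OF finite_Ak]]) (use m in auto)
    finally show "mon \<alpha> x = (\<Sum>\<beta>\<in>Ak (int (\<Sum>i\<in>UNIV. \<alpha> i)). (if \<beta> = \<alpha> then 1 else 0) * mon \<beta> x)" by simp
  qed
  thus ?thesis unfolding poly_le_alt by (rule exI[of _ "\<lambda>\<beta>. if \<beta> = \<alpha> then 1 else 0", rotated])
qed

lemma mon_shift: "mon (\<alpha>(j := \<alpha> j + 1)) x = x$j * mon \<alpha> x"
proof -
  have "mon (\<alpha>(j := \<alpha> j + 1)) x = (x$j) ^ (\<alpha> j + 1) * (\<Prod>i\<in>UNIV-{j}. (x$i) ^ ((\<alpha>(j := \<alpha> j + 1)) i))"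
    unfolding mon_def by (subst prod_split_at[of _ j]) simp
  also have "(\<Prod>i\<in>UNIV-{j}. (x$i) ^ ((\<alpha>(j := \<alpha> j + 1)) i)) = (\<Prod>i\<in>UNIV-{j}. (x$i) ^ \<alpha> i)"
    by (rule prod.cong) auto
  also have "(x$j) ^ (\<alpha> j + 1) * (\<Prod>i\<in>UNIV-{j}. (x$i) ^ \<alpha> i) = x$j * ((x$j) ^ \<alpha> j * (\<Prod>i\<in>UNIV-{j}. (x$i) ^ \<alpha> i))"
    by simp
  also have "(x$j) ^ \<alpha> j * (\<Prod>i\<in>UNIV-{j}. (x$i) ^ \<alpha> i) = mon \<alpha> x"
    unfolding mon_def by (rule prod_split_at[symmetric])
  finally show ?thesis .
qed

lemma poly_le_coord_mult: assumes "poly_le k p" shows "poly_le (k + 1) (\<lambda>x. x$j * p x)"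
proof -
  obtain c1 where p: "p = (\<lambda>x. \<Sum>\<alpha>\<in>Ak k. c1 \<alpha> * mon \<alpha> x)" using assms poly_le_alt by blast
  define sh where "sh = (\<lambda>\<alpha>::'a \<Rightarrow> nat. \<alpha>(j := \<alpha> j + 1))"
  define un where "un = (\<lambda>\<gamma>::'a \<Rightarrow> nat. \<gamma>(j := \<gamma> j - 1))"
  have unsh: "un (sh \<alpha>) = \<alpha>" for \<alpha> by (simp add: un_def sh_def fun_eq_iff)
  have inj: "inj sh" by (metis injI unsh)
  have ms: "mon (sh \<alpha>) x = x$j * mon \<alpha> x" for \<alpha> x unfolding sh_def by (rule mon_shift)
  have sub: "sh ` Ak k \<subseteq> Ak (k + 1)"
  proof
    fix \<gamma> assume "\<gamma> \<in> sh ` Ak k"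
    then obtain \<alpha> where a: "\<alpha> \<in> Ak k" "\<gamma> = sh \<alpha>" by auto
    have "(\<Sum>i\<in>UNIV. sh \<alpha> i) = (\<Sum>i\<in>UNIV. \<alpha> i) + 1"
    proof -
      have "(\<Sum>i\<in>UNIV. sh \<alpha> i) = sh \<alpha> j + (\<Sum>i\<in>UNIV-{j}. sh \<alpha> i)" by (simp add: sum.remove)
      also have "(\<Sum>i\<in>UNIV-{j}. sh \<alpha> i) = (\<Sum>i\<in>UNIV-{j}. \<alpha> i)" by (rule sum.cong) (auto simp: sh_def)
      also have "(\<Sum>i\<in>UNIV. \<alpha> i) = \<alpha> j + (\<Sum>i\<in>UNIV-{j}. \<alpha> i)" by (simp add: sum.remove)
      ultimately show ?thesis by (simp add: sh_def)
    qed
    thus "\<gamma> \<in> Ak (k + 1)" using a unfolding Ak_def by (simp del: of_nat_sum)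
  qed
  define c2 where "c2 = (\<lambda>\<gamma>. if \<gamma> \<in> sh ` Ak k then c1 (un \<gamma>) else 0)"
  have "(\<lambda>x. x$j * p x) = (\<lambda>x. \<Sum>\<gamma>\<in>Ak (k+1). c2 \<gamma> * mon \<gamma> x)"
  proof
    fix x
    have "(\<Sum>\<gamma>\<in>Ak (k+1). c2 \<gamma> * mon \<gamma> x) = (\<Sum>\<gamma>\<in>sh ` Ak k. c2 \<gamma> * mon \<gamma> x)"
      by (rule sum.mono_neutral_right) (use finite_Ak sub in \<open>auto simp: c2_def\<close>)
    also have "\<dots> = (\<Sum>\<alpha>\<in>Ak k. c2 (sh \<alpha>) * mon (sh \<alpha>) x)"
      by (rule sum.reindex[unfolded comp_def]) (rule inj_on_subset[OF inj], simp)
    also have "\<dots> = (\<Sum>\<alpha>\<in>Ak k. x$j * (c1 \<alpha> * mon \<alpha> x))"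
      using ms by (intro sum.cong) (auto simp: c2_def unsh)
    finally show "x$j * p x = (\<Sum>\<gamma>\<in>Ak (k+1). c2 \<gamma> * mon \<gamma> x)"
      by (simp add: p sum_distrib_left)
  qed
  thus ?thesis unfolding poly_le_alt by (rule exI[of _ c2, rotated])
qed

definition Pol :: "(real^'n::finite \<Rightarrow> real) \<Rightarrow> bool" where
  "Pol p \<longleftrightarrow> (\<exists>k. poly_le k p)"

lemma Pol_add: assumes "Pol p" "Pol q" shows "Pol (\<lambda>x. p x + q x)"
proof -
  obtain k1 k2 where "poly_le k1 p" "poly_le k2 q" using assms Pol_def by blast
  hence "poly_le (max k1 k2) p" "poly_le (max k1 k2) q"
    by (metis max.cobounded1 poly_le_mono, metis max.cobounded2 poly_le_mono)
  thus ?thesis unfolding Pol_def by (blast intro: poly_le_add)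
qed

lemma Pol_scale: "Pol p \<Longrightarrow> Pol (\<lambda>x. a * p x)"
  unfolding Pol_def by (blast intro: poly_le_scale)

lemma Pol_const: "Pol (\<lambda>x. a)"
  unfolding Pol_def by (blast intro: poly_le_const)

lemma Pol_mon: "Pol (mon \<alpha>)"
  unfolding Pol_def by (blast intro: poly_le_mon)

lemma Pol_coord_mult: "Pol p \<Longrightarrow> Pol (\<lambda>x. x$j * p x)"
  unfolding Pol_def by (blast intro: poly_le_coord_mult)

lemma Pol_affine_mult: assumes "Pol p" shows "Pol (\<lambda>x. (x$j - a) * p x)"
proof -
  have "Pol (\<lambda>x. x$j * p x + (- a) * p x)" by (intro Pol_add Pol_coord_mult Pol_scale assms)
  thus ?thesis by (simp add: algebra_simps)
qed

lemma Pol_affine_pow: assumes "Pol p" shows "Pol (\<lambda>x. (x$j - a) ^ n * p x)"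
proof (induction n)
  case 0 then show ?case using assms by simp
next
  case (Suc n)
  have "Pol (\<lambda>x. (x$j - a) * ((x$j - a) ^ n * p x))" by (rule Pol_affine_mult[OF Suc])
  thus ?case by (simp add: algebra_simps)
qed

lemma Pol_prod_affine: "finite S \<Longrightarrow> Pol (\<lambda>x. \<Prod>i\<in>S. (x$i - c$i) ^ \<alpha> i)"
proof (induction S rule: finite_induct)
  case empty then show ?case by (simp add: Pol_const)
next
  case (insert j S)
  have "Pol (\<lambda>x. (x$j - c$j) ^ \<alpha> j * (\<Prod>i\<in>S. (x$i - c$i) ^ \<alpha> i))" by (rule Pol_affine_pow[OF insert(3)])
  thus ?case using insert by simp
qed

lemma Pol_cmon: "Pol (cmon c \<alpha>)"
  unfolding cmon_def by (rule Pol_prod_affine) simp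

lemma poly_le_smooth: "poly_le k p \<Longrightarrow> smooth p"
  unfolding poly_le_alt by (auto intro!: smooth_sum finite_Ak smooth_mon)

lemma Pol_smooth: "Pol p \<Longrightarrow> smooth p"
  unfolding Pol_def using poly_le_smooth by blast

lemma Pol_sum: "finite A \<Longrightarrow> (\<And>a. a \<in> A \<Longrightarrow> Pol (F a)) \<Longrightarrow> Pol (\<lambda>x. \<Sum>a\<in>A. c a * F a x)"
proof (induction A rule: finite_induct)
  case empty then show ?case by (simp add: Pol_const)
next
  case (insert a A)
  have "Pol (\<lambda>x. c a * F a x + (\<Sum>a\<in>A. c a * F a x))"
    by (rule Pol_add, rule Pol_scale) (use insert in auto)
  then show ?case using insert by simp
qed

lemma poly_le_deg: assumes "poly_le k p"
  shows "p = (\<lambda>x. 0) \<or> (\<exists>d. int d \<le> k \<and> poly_deg d p)"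
proof (cases "p = (\<lambda>x. 0)")
  case True then show ?thesis by simp
next
  case False
  have k0: "0 \<le> k" using assms False poly_le_neg by force
  have ex: "\<exists>d::nat. poly_le (int d) p" using assms k0 by (intro exI[of _ "nat k"]) simp
  define d where "d = (LEAST d::nat. poly_le (int d) p)"
  have pd: "poly_le (int d) p" unfolding d_def by (rule LeastI_ex[OF ex])
  have "poly_le (int (nat k)) p" using assms k0 by simp
  hence "d \<le> nat k" unfolding d_def by (rule Least_le)
  hence dk: "int d \<le> k" using k0 by linarith
  have "\<not> poly_le (int d - 1) p"
  proof
    assume a: "poly_le (int d - 1) p"
    show False
    proof (cases "d = 0")
      case True then show False using a False poly_le_neg by force
    next
      case F: False
      have "poly_le (int (d - 1)) p" using a F by (simp add: of_nat_diff)
      hence "d \<le> d - 1" unfolding d_def by (rule Least_le)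
      thus False using F by simp
    qed
  qed
  thus ?thesis using pd dk unfolding poly_deg_def by blast
qed


lemma smooth_linedf: "smooth f \<Longrightarrow> linedf f"
  using smooth_sm sm_linedf by blast

lemma mixed_mvt:
  assumes f: "smooth f" and s: "0 < s" and t: "0 < t"
  shows "\<exists>\<sigma> \<tau>. 0 < \<sigma> \<and> \<sigma> < s \<and> 0 < \<tau> \<and> \<tau> < t \<and>
    f (x + s *\<^sub>R axis i 1 + t *\<^sub>R axis j 1) - f (x + s *\<^sub>R axis i 1) - f (x + t *\<^sub>R axis j 1) + f x
     = s * t * dop [i, j] f (x + \<sigma> *\<^sub>R axis i 1 + \<tau> *\<^sub>R axis j 1)"
proof -
  let ?ei = "axis i (1::real) :: real^'a" and ?ej = "axis j (1::real) :: real^'a"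
  define g1 where "g1 = partial i f"
  have lf: "linedf f" using f smooth_linedf by blast
  have lg: "linedf g1" unfolding g1_def using f smooth_partial smooth_linedf by blast
  define \<phi> where "\<phi> = (\<lambda>r. f (x + r *\<^sub>R ?ei + t *\<^sub>R ?ej) - f (x + r *\<^sub>R ?ei))"
  have d\<phi>: "(\<phi> has_real_derivative (g1 (x + r *\<^sub>R ?ei + t *\<^sub>R ?ej) - g1 (x + r *\<^sub>R ?ei))) (at r)" for r
  proof -
    have a: "((\<lambda>r. f ((x + t *\<^sub>R ?ej) + r *\<^sub>R ?ei)) has_real_derivative partial i f ((x + t *\<^sub>R ?ej) + r *\<^sub>R ?ei)) (at r)"
      by (rule linedf_deriv[OF lf])
    have b: "((\<lambda>r. f (x + r *\<^sub>R ?ei)) has_real_derivative partial i f (x + r *\<^sub>R ?ei)) (at r)"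
      by (rule linedf_deriv[OF lf])
    have c: "\<And>r. (x + t *\<^sub>R ?ej) + r *\<^sub>R ?ei = x + r *\<^sub>R ?ei + t *\<^sub>R ?ej" by (simp add: algebra_simps)
    show ?thesis unfolding \<phi>_def g1_def using DERIV_diff[OF a b] unfolding c .
  qed
  obtain \<sigma> where \<sigma>: "0 < \<sigma>" "\<sigma> < s" "\<phi> s - \<phi> 0 = (s - 0) * (g1 (x + \<sigma> *\<^sub>R ?ei + t *\<^sub>R ?ej) - g1 (x + \<sigma> *\<^sub>R ?ei))"
    using MVT2[OF s d\<phi>] by blast
  define \<psi> where "\<psi> = (\<lambda>r. g1 (x + \<sigma> *\<^sub>R ?ei + r *\<^sub>R ?ej))"
  have d\<psi>: "(\<psi> has_real_derivative partial j g1 (x + \<sigma> *\<^sub>R ?ei + r *\<^sub>R ?ej)) (at r)" for r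
    unfolding \<psi>_def by (rule linedf_deriv[OF lg])
  obtain \<tau> where \<tau>: "0 < \<tau>" "\<tau> < t" "\<psi> t - \<psi> 0 = (t - 0) * partial j g1 (x + \<sigma> *\<^sub>R ?ei + \<tau> *\<^sub>R ?ej)"
    using MVT2[OF t d\<psi>] by blast
  have "f (x + s *\<^sub>R ?ei + t *\<^sub>R ?ej) - f (x + s *\<^sub>R ?ei) - f (x + t *\<^sub>R ?ej) + f x = \<phi> s - \<phi> 0"
    unfolding \<phi>_def by simp
  also have "\<dots> = s * (\<psi> t - \<psi> 0)" using \<sigma>(3) unfolding \<psi>_def by simp
  also have "\<dots> = s * t * dop [i, j] f (x + \<sigma> *\<^sub>R ?ei + \<tau> *\<^sub>R ?ej)"
    using \<tau>(3) by (simp add: g1_def)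
  finally show ?thesis using \<sigma> \<tau> by blast
qed

lemma schwarz_pt:
  assumes f: "smooth f"
  shows "dop [i, j] f x = dop [j, i] f x"
proof (rule ccontr)
  let ?ei = "axis i (1::real) :: real^'a" and ?ej = "axis j (1::real) :: real^'a"
  let ?A = "dop [i, j] f x" and ?B = "dop [j, i] f x"
  assume ne: "?A \<noteq> ?B"
  define \<epsilon> where "\<epsilon> = \<bar>?A - ?B\<bar> / 3"
  have \<epsilon>: "\<epsilon> > 0" using ne unfolding \<epsilon>_def by simp
  have c1: "continuous (at x) (dop [i, j] f)"
    using f unfolding smooth_def using continuous_on_eq_continuous_at by blast
  have c2: "continuous (at x) (dop [j, i] f)"
    using f unfolding smooth_def using continuous_on_eq_continuous_at by blast
  obtain d1 where d1: "d1 > 0" "\<And>y. dist y x < d1 \<Longrightarrow> dist (dop [i, j] f y) ?A < \<epsilon>"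
    using c1 \<epsilon> unfolding continuous_at_eps_delta by blast
  obtain d2 where d2: "d2 > 0" "\<And>y. dist y x < d2 \<Longrightarrow> dist (dop [j, i] f y) ?B < \<epsilon>"
    using c2 \<epsilon> unfolding continuous_at_eps_delta by blast
  define s where "s = min d1 d2 / 3"
  have s: "s > 0" using d1 d2 unfolding s_def by simp
  obtain \<sigma> \<tau> where st: "0 < \<sigma>" "\<sigma> < s" "0 < \<tau>" "\<tau> < s"
    "f (x + s *\<^sub>R ?ei + s *\<^sub>R ?ej) - f (x + s *\<^sub>R ?ei) - f (x + s *\<^sub>R ?ej) + f x
     = s * s * dop [i, j] f (x + \<sigma> *\<^sub>R ?ei + \<tau> *\<^sub>R ?ej)"
    using mixed_mvt[OF f s s] by blast
  obtain \<sigma>' \<tau>' where st': "0 < \<sigma>'" "\<sigma>' < s" "0 < \<tau>'" "\<tau>' < s"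
    "f (x + s *\<^sub>R ?ej + s *\<^sub>R ?ei) - f (x + s *\<^sub>R ?ej) - f (x + s *\<^sub>R ?ei) + f x
     = s * s * dop [j, i] f (x + \<sigma>' *\<^sub>R ?ej + \<tau>' *\<^sub>R ?ei)"
    using mixed_mvt[OF f s s] by blast
  have comm: "x + s *\<^sub>R ?ej + s *\<^sub>R ?ei = x + s *\<^sub>R ?ei + s *\<^sub>R ?ej" by (simp add: algebra_simps)
  have eq: "dop [i, j] f (x + \<sigma> *\<^sub>R ?ei + \<tau> *\<^sub>R ?ej) = dop [j, i] f (x + \<sigma>' *\<^sub>R ?ej + \<tau>' *\<^sub>R ?ei)"
  proof -
    have "s * s * dop [i, j] f (x + \<sigma> *\<^sub>R ?ei + \<tau> *\<^sub>R ?ej) = s * s * dop [j, i] f (x + \<sigma>' *\<^sub>R ?ej + \<tau>' *\<^sub>R ?ei)"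
      using st(5) st'(5) unfolding comm by linarith
    thus ?thesis using s by simp
  qed
  have nrm: "dist (x + a *\<^sub>R axis i' 1 + b *\<^sub>R axis j' 1) x < min d1 d2"
    if "0 < a" "a < s" "0 < b" "b < s" for a b and i' j' :: 'a
  proof -
    have "dist (x + a *\<^sub>R axis i' 1 + b *\<^sub>R axis j' 1) x = norm (a *\<^sub>R axis i' (1::real) + b *\<^sub>R axis j' 1)"
      by (simp add: dist_norm)
    also have "\<dots> \<le> norm (a *\<^sub>R axis i' (1::real)) + norm (b *\<^sub>R axis j' (1::real))" by (rule norm_triangle_ineq)
    also have "\<dots> = a + b" using that by simp
    also have "\<dots> < min d1 d2" using that unfolding s_def by simp
    finally show ?thesis .
  qed
  have "dist (dop [i, j] f (x + \<sigma> *\<^sub>R ?ei + \<tau> *\<^sub>R ?ej)) ?A < \<epsilon>"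
    using d1(2) nrm[OF st(1-4), of i j] by simp
  moreover have "dist (dop [j, i] f (x + \<sigma>' *\<^sub>R ?ej + \<tau>' *\<^sub>R ?ei)) ?B < \<epsilon>"
    using d2(2) nrm[OF st'(1-4), of j i] by simp
  ultimately have "\<bar>?A - ?B\<bar> < 2 * \<epsilon>" using eq unfolding dist_real_def by linarith
  thus False unfolding \<epsilon>_def by simp
qed

lemma schwarz: "smooth f \<Longrightarrow> partial j (partial i f) = partial i (partial j f)"
  using schwarz_pt[of f i j] by (auto simp: fun_eq_iff)

lemma dop_snoc_front: "smooth f \<Longrightarrow> dop (v @ [a]) f = dop (a # v) f"
proof (induction v arbitrary: f)
  case Nil then show ?case by simp
next
  case (Cons b v)
  have "dop ((b # v) @ [a]) f = dop (v @ [a]) (partial b f)" by simp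
  also have "\<dots> = dop (a # v) (partial b f)" using Cons smooth_partial by blast
  also have "\<dots> = dop v (partial a (partial b f))" by simp
  also have "\<dots> = dop v (partial b (partial a f))" using schwarz[OF Cons.prems] by simp
  finally show ?case by simp
qed

lemma dop_perm: "smooth f \<Longrightarrow> mset u = mset v \<Longrightarrow> dop u f = dop v f"
proof (induction u arbitrary: v f)
  case Nil then show ?case by simp
next
  case (Cons a u)
  have "a \<in> set v" using Cons.prems(2) by (metis list.set_intros(1) set_mset_mset)
  then obtain v1 v2 where v: "v = v1 @ a # v2" by (meson split_list)
  have m: "mset u = mset (v1 @ v2)" using Cons.prems(2) v by simp
  have "dop v f = dop (a # v2) (dop v1 f)" unfolding v dop_append[symmetric] by simp
  also have "\<dots> = dop v2 (dop (v1 @ [a]) f)" by (simp add: dop_append)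
  also have "\<dots> = dop v2 (dop (a # v1) f)" using dop_snoc_front[OF Cons.prems(1)] by simp
  also have "\<dots> = dop (v1 @ v2) (partial a f)" by (simp add: dop_append)
  also have "\<dots> = dop u (partial a f)" using Cons.IH[OF smooth_partial[OF Cons.prems(1)] m] by simp
  finally show ?case by simp
qed


lemma sum_cnt: fixes u :: "'n::finite list" shows "(\<Sum>i\<in>UNIV. cnt u i) = length u"
proof (induction u)
  case Nil then show ?case by (simp add: cnt_def)
next
  case (Cons a u)
  have "(\<Sum>i\<in>UNIV. cnt (a # u) i) = (\<Sum>i\<in>UNIV. cnt u i + (if i = a then 1 else 0))"
    by (rule sum.cong) (auto simp: cnt_def)
  also have "\<dots> = (\<Sum>i\<in>UNIV. cnt u i) + (\<Sum>i\<in>UNIV. if i = a then 1 else 0)" by (rule sum.distrib)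
  also have "(\<Sum>i\<in>UNIV. if i = a then 1 else (0::nat)) = 1" by simp
  finally show ?case using Cons by simp
qed

lemma cnt_surj: fixes \<alpha> :: "'n::finite \<Rightarrow> nat" shows "\<exists>w. cnt w = \<alpha>"
proof -
  define M where "M = (\<Sum>i\<in>(UNIV::'n set). replicate_mset (\<alpha> i) i)"
  obtain w where w: "mset w = M" using ex_mset by blast
  have "count M j = \<alpha> j" for j
    unfolding M_def count_sum by (simp add: finite_UNIV)
  thus ?thesis using w by (intro exI[of _ w]) (auto simp: cnt_def)
qed

definition wd :: "('n::finite \<Rightarrow> nat) \<Rightarrow> 'n list" where
  "wd \<alpha> = (SOME w. cnt w = \<alpha>)"

lemma cnt_wd: "cnt (wd \<alpha>) = \<alpha>"
  unfolding wd_def by (rule someI_ex[OF cnt_surj])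

lemma cnt_eq_mset: "cnt u = cnt v \<Longrightarrow> mset u = mset v"
  by (rule multiset_eqI) (simp add: cnt_def fun_eq_iff)

lemma taylor_poly:
  assumes f: "smooth f"
  shows "\<exists>p. Pol p \<and> (\<forall>u. length u \<le> N \<longrightarrow> dop u p c = dop u f c)"
proof -
  define co where "co = (\<lambda>\<alpha>. dop (wd \<alpha>) f c / (\<Prod>i\<in>UNIV. fact (\<alpha> i)))"
  define p where "p = (\<lambda>x. \<Sum>\<alpha>\<in>Ak (int N). co \<alpha> * cmon c \<alpha> x)"
  have Pp: "Pol p" unfolding p_def by (intro Pol_sum finite_Ak Pol_cmon)
  have "dop u p c = dop u f c" if lu: "length u \<le> N" for u
  proof -
    have mem: "cnt u \<in> Ak (int N)" unfolding Ak_def using lu sum_cnt[of u] by (simp del: of_nat_sum)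
    have "dop u p c = (\<Sum>\<alpha>\<in>Ak (int N). co \<alpha> * dop u (cmon c \<alpha>) c)"
      unfolding p_def by (subst dop_sum_smooth) (auto intro: finite_Ak smooth_cmon)
    also have "\<dots> = (\<Sum>\<alpha>\<in>Ak (int N). if \<alpha> = cnt u then co (cnt u) * (\<Prod>i\<in>UNIV. fact (cnt u i)) else 0)"
      by (rule sum.cong) (auto simp: dop_cmon_at_c)
    also have "\<dots> = co (cnt u) * (\<Prod>i\<in>UNIV. fact (cnt u i))"
      by (rule trans[OF sum.delta[OF finite_Ak]]) (use mem in auto)
    also have "\<dots> = dop (wd (cnt u)) f c"
      unfolding co_def by (simp add: prod_zero_iff)
    also have "\<dots> = dop u f c"
      using dop_perm[OF f cnt_eq_mset[OF cnt_wd]] by simp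
    finally show ?thesis .
  qed
  thus ?thesis using Pp by blast
qed

lemma bidiff_agree:
  assumes P: "bidiff P" and P': "bidiff P'"
    and agree: "\<And>p q. Pol p \<Longrightarrow> Pol q \<Longrightarrow> P p q = P' p q"
    and f: "smooth f" and g: "smooth g"
  shows "P f g = P' f g"
proof
  fix x
  obtain S co where S: "finite S" "\<forall>p\<in>S. smooth (co p)"
    "\<forall>f g. smooth f \<longrightarrow> smooth g \<longrightarrow> P f g = (\<lambda>x. \<Sum>(u,v)\<in>S. co (u,v) x * dop u f x * dop v g x)"
    using P unfolding bidiff_def by blast
  obtain S' co' where S': "finite S'" "\<forall>p\<in>S'. smooth (co' p)"
    "\<forall>f g. smooth f \<longrightarrow> smooth g \<longrightarrow> P' f g = (\<lambda>x. \<Sum>(u,v)\<in>S'. co' (u,v) x * dop u f x * dop v g x)"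
    using P' unfolding bidiff_def by blast
  define N where "N = (\<Sum>(u,v)\<in>S \<union> S'. length u + length v)"
  have len: "length u \<le> N \<and> length v \<le> N" if "(u,v) \<in> S \<union> S'" for u v
  proof -
    have "length u + length v \<le> N"
      unfolding N_def using member_le_sum[of "(u,v)" "S \<union> S'" "\<lambda>(u,v). length u + length v"] that S(1) S'(1)
      by simp
    thus ?thesis by simp
  qed
  obtain p where p: "Pol p" "\<And>u. length u \<le> N \<Longrightarrow> dop u p x = dop u f x"
    using taylor_poly[OF f, of N x] by blast
  obtain q where q: "Pol q" "\<And>u. length u \<le> N \<Longrightarrow> dop u q x = dop u g x"
    using taylor_poly[OF g, of N x] by blast
  have sp: "smooth p" "smooth q" using p q Pol_smooth by blast+
  have lS: "dop u p x = dop u f x \<and> dop v q x = dop v g x" if "(u,v) \<in> S \<union> S'" for u v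
    using len[OF that] p(2) q(2) by blast
  have "P f g x = (\<Sum>(u,v)\<in>S. co (u,v) x * dop u f x * dop v g x)" using S(3) f g by simp
  also have "\<dots> = (\<Sum>(u,v)\<in>S. co (u,v) x * dop u p x * dop v q x)"
  proof (rule sum.cong[OF refl], clarify)
    fix u v assume "(u,v) \<in> S"
    then show "co (u,v) x * dop u f x * dop v g x = co (u,v) x * dop u p x * dop v q x"
      using lS[of u v] by simp
  qed
  also have "\<dots> = P p q x" using S(3) sp by simp
  also have "\<dots> = P' p q x" using agree p q by simp
  also have "\<dots> = (\<Sum>(u,v)\<in>S'. co' (u,v) x * dop u p x * dop v q x)" using S'(3) sp by simp
  also have "\<dots> = (\<Sum>(u,v)\<in>S'. co' (u,v) x * dop u f x * dop v g x)"
  proof (rule sum.cong[OF refl], clarify)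
    fix u v assume "(u,v) \<in> S'"
    then show "co' (u,v) x * dop u p x * dop v q x = co' (u,v) x * dop u f x * dop v g x"
      using lS[of u v] by simp
  qed
  also have "\<dots> = P' f g x" using S'(3) f g by simp
  finally show "P f g x = P' f g x" .
qed


lemma prod_list_map_cnt:
  fixes a :: "'n::finite \<Rightarrow> real"
  shows "prod_list (map a w) = (\<Prod>i\<in>UNIV. a i ^ cnt w i)"
proof (induction w)
  case Nil then show ?case by (simp add: cnt_def)
next
  case (Cons b w)
  have "(\<Prod>i\<in>UNIV. a i ^ cnt (b # w) i) = (\<Prod>i\<in>UNIV. a i ^ cnt w i * (if i = b then a i else 1))"
    by (rule prod.cong) (auto simp: cnt_def)
  also have "\<dots> = (\<Prod>i\<in>UNIV. a i ^ cnt w i) * (\<Prod>i\<in>UNIV. (if i = b then a i else 1))"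
    by (rule prod.distrib)
  also have "(\<Prod>i\<in>UNIV. (if i = b then a i else 1)) = a b" by simp
  finally show ?case using Cons by simp
qed

definition W :: "nat \<Rightarrow> 'n::finite list set" where
  "W n = {w. set w \<subseteq> UNIV \<and> length w = n}"

lemma finite_W: "finite (W n)"
  unfolding W_def by (rule finite_lists_length_eq) simp

lemma pow_sum_words:
  fixes a :: "'n::finite \<Rightarrow> real"
  shows "(\<Sum>i\<in>UNIV. a i) ^ n = (\<Sum>w\<in>W n. prod_list (map a w))"
proof (induction n)
  case 0
  have "W 0 = ({[]} :: 'n list set)" unfolding W_def by auto
  then show ?case by simp
next
  case (Suc n)
  have e: "W (Suc n) = (\<lambda>(xs, i). i # xs) ` (W n \<times> UNIV)"
    unfolding W_def by (rule lists_length_Suc_eq)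
  have inj: "inj_on (\<lambda>(xs, i). i # xs) (W n \<times> (UNIV :: 'n set))"
    by (auto simp: inj_on_def)
  have "(\<Sum>w\<in>W (Suc n). prod_list (map a w)) = (\<Sum>(xs, i)\<in>W n \<times> UNIV. prod_list (map a (i # xs)))"
    unfolding e by (subst sum.reindex[OF inj]) (simp add: case_prod_beta comp_def)
  also have "\<dots> = (\<Sum>xs\<in>W n. \<Sum>i\<in>UNIV. a i * prod_list (map a xs))"
    by (subst sum.cartesian_product[symmetric]) simp
  also have "\<dots> = (\<Sum>xs\<in>W n. prod_list (map a xs)) * (\<Sum>i\<in>UNIV. a i)"
    by (simp add: sum_distrib_right sum_distrib_left mult.commute)
  finally show ?case using Suc by (simp add: mult.commute)
qed

lemma inner_pow_expand:
  fixes X :: "real^'n::finite"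
  shows "(\<lambda>x. (X \<bullet> x) ^ n) = (\<lambda>x. \<Sum>w\<in>W n. mon (cnt w) X * mon (cnt w) x)"
proof
  fix x :: "real^'n"
  have "(X \<bullet> x) ^ n = (\<Sum>i\<in>UNIV. X$i * x$i) ^ n" by (simp add: inner_vec_def)
  also have "\<dots> = (\<Sum>w\<in>W n. prod_list (map (\<lambda>i. X$i * x$i) w))" by (rule pow_sum_words)
  also have "\<dots> = (\<Sum>w\<in>W n. mon (cnt w) X * mon (cnt w) x)"
  proof (rule sum.cong[OF refl])
    fix w
    show "prod_list (map (\<lambda>i. X$i * x$i) w) = mon (cnt w) X * mon (cnt w) x"
      unfolding prod_list_map_cnt mon_def by (simp add: power_mult_distrib prod.distrib)
  qed
  finally show "(X \<bullet> x) ^ n = (\<Sum>w\<in>W n. mon (cnt w) X * mon (cnt w) x)" .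
qed

lemma lin_sum:
  assumes lin: "\<And>f g a b. smooth f \<Longrightarrow> smooth g \<Longrightarrow> D (\<lambda>x. a * f x + b * g x) = a * D f + b * D g"
    and fin: "finite A" and sm: "\<And>a. a \<in> A \<Longrightarrow> smooth (F a)"
  shows "D (\<lambda>x. \<Sum>a\<in>A. c a * F a x) = (\<Sum>a\<in>A. c a * D (F a))"
  using fin sm
proof (induction A rule: finite_induct)
  case empty
  have "D (\<lambda>x. 0 * (\<lambda>x. 0) x + 0 * (\<lambda>x. 0) x) = 0 * D (\<lambda>x. 0) + 0 * D (\<lambda>x. 0)"
    by (rule lin) (simp_all add: smooth_zero)
  then show ?case by simp
next
  case (insert a A)
  have s: "smooth (\<lambda>x. \<Sum>a\<in>A. c a * F a x)" using insert by (intro smooth_sum) auto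
  have "D (\<lambda>x. c a * F a x + 1 * (\<Sum>a\<in>A. c a * F a x)) = c a * D (F a) + 1 * D (\<lambda>x. \<Sum>a\<in>A. c a * F a x)"
    by (rule lin) (use insert s in auto)
  then show ?case using insert by simp
qed

lemma powers_span:
  assumes lin: "\<And>f g a b. smooth f \<Longrightarrow> smooth g \<Longrightarrow> D (\<lambda>x. a * f x + b * g x) = a * D f + b * D g"
    and pw: "\<And>(X :: real^'n::finite) n. D (\<lambda>x. (X \<bullet> x) ^ n) = 0"
  shows "D (mon \<alpha>) = 0"
proof -
  define u where "u = wd \<alpha>"
  define n where "n = length u"
  have cu: "cnt u = \<alpha>" unfolding u_def by (rule cnt_wd)
  define H where "H = (\<lambda>X::real^'n. \<Sum>w\<in>W n. D (mon (cnt w)) * mon (cnt w) X)"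
  have H0: "H = (\<lambda>X. 0)"
  proof
    fix X :: "real^'n"
    have "0 = D (\<lambda>x. \<Sum>w\<in>W n. mon (cnt w) X * mon (cnt w) x)"
      using pw[of X n] unfolding inner_pow_expand by simp
    also have "\<dots> = (\<Sum>w\<in>W n. mon (cnt w) X * D (mon (cnt w)))"
      by (rule lin_sum[of D, OF _ finite_W], fact lin, rule smooth_mon)
    finally show "H X = 0" unfolding H_def by (simp add: mult.commute)
  qed
  have "dop u H 0 = (\<Sum>w\<in>W n. D (mon (cnt w)) * dop u (mon (cnt w)) 0)"
    unfolding H_def by (subst dop_sum_smooth) (auto intro: finite_W smooth_mon)
  also have "\<dots> = (\<Sum>w\<in>W n. if cnt w = \<alpha> then D (mon \<alpha>) * (\<Prod>i\<in>UNIV. fact (\<alpha> i)) else 0)"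
    by (rule sum.cong[OF refl]) (auto simp: mon_cmon dop_cmon_at_c cu)
  also have "\<dots> = (\<Sum>w\<in>{w \<in> W n. cnt w = \<alpha>}. D (mon \<alpha>) * (\<Prod>i\<in>UNIV. fact (\<alpha> i)))"
    by (rule sum.inter_filter[symmetric, OF finite_W])
  also have "\<dots> = of_nat (card {w \<in> W n. cnt w = \<alpha>}) * (D (mon \<alpha>) * (\<Prod>i\<in>UNIV. fact (\<alpha> i)))"
    by simp
  finally have e: "dop u H 0 = of_nat (card {w \<in> W n. cnt w = \<alpha>}) * (D (mon \<alpha>) * (\<Prod>i\<in>UNIV. fact (\<alpha> i)))" .
  have "dop u H 0 = 0" unfolding H0 dop_zero by simp
  moreover have "card {w \<in> W n. cnt w = \<alpha>} \<noteq> 0"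
  proof -
    have "u \<in> {w \<in> W n. cnt w = \<alpha>}" using cu unfolding W_def n_def by simp
    moreover have "finite {w \<in> W n. cnt w = \<alpha>}" using finite_W[of n] by (rule rev_finite_subset) auto
    ultimately show ?thesis using card_0_eq by blast
  qed
  moreover have "(\<Prod>i\<in>UNIV. fact (\<alpha> i) :: real) \<noteq> 0" by simp
  ultimately show ?thesis using e by simp
qed

lemma powers_span_Pol:
  assumes lin: "\<And>f g a b. smooth f \<Longrightarrow> smooth g \<Longrightarrow> D (\<lambda>x. a * f x + b * g x) = a * D f + b * D g"
    and pw: "\<And>(X :: real^'n::finite) n. D (\<lambda>x. (X \<bullet> x) ^ n) = 0"
    and p: "Pol p"
  shows "D p = 0"
proof -
  obtain k co where "p = (\<lambda>x. \<Sum>\<alpha>\<in>Ak k. co \<alpha> * mon \<alpha> x)" using p unfolding Pol_def poly_le_alt by blast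
  moreover have "D (\<lambda>x. \<Sum>\<alpha>\<in>Ak k. co \<alpha> * mon \<alpha> x) = (\<Sum>\<alpha>\<in>Ak k. co \<alpha> * D (mon \<alpha>))"
    by (rule lin_sum[of D, OF _ finite_Ak], fact lin, rule smooth_mon)
  ultimately have "D p = (\<Sum>\<alpha>\<in>Ak k. co \<alpha> * D (mon \<alpha>))" by simp
  also have "\<dots> = 0"
  proof -
    have z: "D (mon \<alpha>) = 0" for \<alpha> by (rule powers_span[of D], fact lin, fact pw)
    show ?thesis by (simp add: z)
  qed
  finally show ?thesis .
qed


lemma bidiff_lin_left:
  assumes P: "bidiff P" and f: "smooth f" and g: "smooth g" and h: "smooth h"
  shows "P (\<lambda>x. a * f x + b * g x) h x = a * P f h x + b * P g h x"
proof -
  obtain S co where S: "finite S"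
    "\<forall>f g. smooth f \<longrightarrow> smooth g \<longrightarrow> P f g = (\<lambda>x. \<Sum>(u,v)\<in>S. co (u,v) x * dop u f x * dop v g x)"
    using P unfolding bidiff_def by blast
  have s1: "smooth (\<lambda>x. a * f x)" "smooth (\<lambda>x. b * g x)" using f g smooth_scale by blast+
  have sfg: "smooth (\<lambda>x. a * f x + b * g x)" using s1 smooth_add by blast
  have d: "dop u (\<lambda>x. a * f x + b * g x) x = a * dop u f x + b * dop u g x" for u
    using dop_add_sm1[OF smooth_sm[OF s1(1)] smooth_sm[OF s1(2)], of u]
      dop_scale_sm1[OF smooth_sm[OF f], of u a] dop_scale_sm1[OF smooth_sm[OF g], of u b] by simp
  have "P (\<lambda>x. a * f x + b * g x) h x = (\<Sum>(u,v)\<in>S. co (u,v) x * dop u (\<lambda>x. a * f x + b * g x) x * dop v h x)"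
    using S(2) sfg h by simp
  also have "\<dots> = (\<Sum>(u,v)\<in>S. a * (co (u,v) x * dop u f x * dop v h x) + b * (co (u,v) x * dop u g x * dop v h x))"
    by (rule sum.cong[OF refl]) (auto simp: d algebra_simps)
  also have "\<dots> = a * (\<Sum>(u,v)\<in>S. co (u,v) x * dop u f x * dop v h x) + b * (\<Sum>(u,v)\<in>S. co (u,v) x * dop u g x * dop v h x)"
    by (simp add: sum.distrib sum_distrib_left case_prod_unfold)
  also have "\<dots> = a * P f h x + b * P g h x" using S(2) f g h by simp
  finally show ?thesis .
qed

lemma bidiff_lin_right:
  assumes P: "bidiff P" and f: "smooth f" and g: "smooth g" and h: "smooth h"
  shows "P h (\<lambda>x. a * f x + b * g x) x = a * P h f x + b * P h g x"
proof -
  obtain S co where S: "finite S"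
    "\<forall>f g. smooth f \<longrightarrow> smooth g \<longrightarrow> P f g = (\<lambda>x. \<Sum>(u,v)\<in>S. co (u,v) x * dop u f x * dop v g x)"
    using P unfolding bidiff_def by blast
  have s1: "smooth (\<lambda>x. a * f x)" "smooth (\<lambda>x. b * g x)" using f g smooth_scale by blast+
  have sfg: "smooth (\<lambda>x. a * f x + b * g x)" using s1 smooth_add by blast
  have d: "dop u (\<lambda>x. a * f x + b * g x) x = a * dop u f x + b * dop u g x" for u
    using dop_add_sm1[OF smooth_sm[OF s1(1)] smooth_sm[OF s1(2)], of u]
      dop_scale_sm1[OF smooth_sm[OF f], of u a] dop_scale_sm1[OF smooth_sm[OF g], of u b] by simp
  have "P h (\<lambda>x. a * f x + b * g x) x = (\<Sum>(u,v)\<in>S. co (u,v) x * dop u h x * dop v (\<lambda>x. a * f x + b * g x) x)"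
    using S(2) sfg h by simp
  also have "\<dots> = (\<Sum>(u,v)\<in>S. a * (co (u,v) x * dop u h x * dop v f x) + b * (co (u,v) x * dop u h x * dop v g x))"
    by (rule sum.cong[OF refl]) (auto simp: d algebra_simps)
  also have "\<dots> = a * (\<Sum>(u,v)\<in>S. co (u,v) x * dop u h x * dop v f x) + b * (\<Sum>(u,v)\<in>S. co (u,v) x * dop u h x * dop v g x)"
    by (simp add: sum.distrib sum_distrib_left case_prod_unfold)
  also have "\<dots> = a * P h f x + b * P h g x" using S(2) f g h by simp
  finally show ?thesis .
qed

lemma bidiff_zero_left: "bidiff P \<Longrightarrow> smooth h \<Longrightarrow> P (\<lambda>x. 0) h = (\<lambda>x. 0)"
  using bidiff_lin_left[of P "\<lambda>x. 0" "\<lambda>x. 0" h 0 0] smooth_zero by (auto simp: fun_eq_iff)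

lemma bidiff_zero_right: "bidiff P \<Longrightarrow> smooth h \<Longrightarrow> P h (\<lambda>x. 0) = (\<lambda>x. 0)"
  using bidiff_lin_right[of P "\<lambda>x. 0" "\<lambda>x. 0" h 0 0] smooth_zero by (auto simp: fun_eq_iff)

lemma bidiff_sum_right:
  assumes P: "bidiff P" and h: "smooth h" and fin: "finite A" and F: "\<And>a. a \<in> A \<Longrightarrow> smooth (F a)"
  shows "P h (\<lambda>x. \<Sum>a\<in>A. c a * F a x) x = (\<Sum>a\<in>A. c a * P h (F a) x)"
proof -
  have "(\<lambda>f. P h f x) (\<lambda>x. \<Sum>a\<in>A. c a * F a x) = (\<Sum>a\<in>A. c a * (\<lambda>f. P h f x) (F a))"
    by (rule lin_sum[OF _ fin F]) (rule bidiff_lin_right[OF P _ _ h])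
  thus ?thesis by simp
qed

definition sq :: "(real^'n::finite \<Rightarrow> real) \<Rightarrow> nat \<Rightarrow> real^'n \<Rightarrow> real" where
  "sq f = (\<lambda>k. if k = 0 then f else (\<lambda>x. 0))"

lemma smooth_sq: "smooth f \<Longrightarrow> smooth (sq f k)"
  unfolding sq_def by (simp add: smooth_zero)

lemma star_sq_left:
  assumes bd: "\<And>j. bidiff (Pr j)" and f: "smooth f" and B: "\<And>k. smooth (B k)"
  shows "star Pr (sq f) B k x = (\<Sum>i\<le>k. Pr i f (B (k - i)) x)"
proof -
  have "star Pr (sq f) B k x = (\<Sum>i\<le>k. \<Sum>j\<le>k - i. Pr i (sq f j) (B (k - i - j)) x)"
    by (simp add: star_def)
  also have "\<dots> = (\<Sum>i\<le>k. \<Sum>j\<le>k - i. if j = 0 then Pr i f (B (k - i)) x else 0)"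
    by (intro sum.cong refl) (auto simp: sq_def bidiff_zero_left[OF bd B])
  also have "\<dots> = (\<Sum>i\<le>k. Pr i f (B (k - i)) x)"
    by (intro sum.cong refl) (subst sum.delta[OF finite_atMost], simp)
  finally show ?thesis .
qed

lemma star_sq_right:
  assumes bd: "\<And>j. bidiff (Pr j)" and g: "smooth g" and A: "\<And>k. smooth (A k)"
  shows "star Pr A (sq g) k x = (\<Sum>i\<le>k. Pr i (A (k - i)) g x)"
proof -
  have "star Pr A (sq g) k x = (\<Sum>i\<le>k. \<Sum>j\<le>k - i. Pr i (A j) (sq g (k - i - j)) x)"
    by (simp add: star_def)
  also have "\<dots> = (\<Sum>i\<le>k. \<Sum>j\<le>k - i. if j = k - i then Pr i (A (k - i)) g x else 0)"
    by (intro sum.cong refl) (auto simp: sq_def bidiff_zero_right[OF bd A])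
  also have "\<dots> = (\<Sum>i\<le>k. Pr i (A (k - i)) g x)"
    by (intro sum.cong refl) (subst sum.delta[OF finite_atMost], simp)
  finally show ?thesis .
qed

lemma star_sq_sq:
  assumes bd: "\<And>j. bidiff (Pr j)" and f: "smooth f" and g: "smooth g"
  shows "star Pr (sq f) (sq g) = (\<lambda>k. Pr k f g)"
proof (intro ext)
  fix k x
  have "star Pr (sq f) (sq g) k x = (\<Sum>i\<le>k. Pr i f (sq g (k - i)) x)"
    by (rule star_sq_left[OF bd f smooth_sq[OF g]])
  also have "\<dots> = (\<Sum>i\<le>k. if i = k then Pr k f g x else 0)"
    by (intro sum.cong refl) (auto simp: sq_def bidiff_zero_right[OF bd f])
  also have "\<dots> = Pr k f g x" by simp
  finally show "star Pr (sq f) (sq g) k x = Pr k f g x" .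
qed

lemma Pol_nat: "Pol p \<Longrightarrow> \<exists>n::nat. poly_le (int n) p"
  unfolding Pol_def by (metis nat_int nat_le_iff nle_le poly_le_mono)

lemma poly_le_coord: "poly_le 1 (\<lambda>x. x$i)"
  using poly_le_coord_mult[OF poly_le_const[of 1], of i] by simp

context
  fixes c and Pr :: "nat \<Rightarrow> (real^'n::finite \<Rightarrow> real) \<Rightarrow> (real^'n \<Rightarrow> real) \<Rightarrow> real^'n \<Rightarrow> real"
  assumes sp: "star_product c Pr" and p1: "P1 Pr"
begin

lemma bd: "bidiff (Pr j)" using sp unfolding star_product_def by blast

lemma pr0: "smooth a \<Longrightarrow> smooth b \<Longrightarrow> Pr 0 a b = (\<lambda>x. a x * b x)"
  using sp unfolding star_product_def by blast

lemma assoc: "(\<And>k. smooth (A k)) \<Longrightarrow> (\<And>k. smooth (B k)) \<Longrightarrow> (\<And>k. smooth (C k)) \<Longrightarrow>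
  star Pr (star Pr A B) C = star Pr A (star Pr B C)"
  using sp unfolding star_product_def by blast

lemma P1_poly:
  assumes p: "poly_le (int n) p" and q: "poly_le (int m) q"
  shows "poly_le (int n + int m - 1) (\<lambda>x. Pr j p q x - (if j = 0 then p x * q x else 0))"
proof -
  have sp': "smooth p" "smooth q" using p q poly_le_smooth by blast+
  consider "p = (\<lambda>x. 0)" | "q = (\<lambda>x. 0)" | d1 d2 where "int d1 \<le> int n" "poly_deg d1 p" "int d2 \<le> int m" "poly_deg d2 q"
    using poly_le_deg[OF p] poly_le_deg[OF q] by blast
  then show ?thesis
  proof cases
    case 1
    have "(\<lambda>x. Pr j p q x - (if j = 0 then p x * q x else 0)) = (\<lambda>x. 0)"
      unfolding 1 using bidiff_zero_left[OF bd sp'(2)] by (auto simp: fun_eq_iff)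
    then show ?thesis by (simp add: poly_le_zero)
  next
    case 2
    have "(\<lambda>x. Pr j p q x - (if j = 0 then p x * q x else 0)) = (\<lambda>x. 0)"
      unfolding 2 using bidiff_zero_right[OF bd sp'(1)] by (auto simp: fun_eq_iff)
    then show ?thesis by (simp add: poly_le_zero)
  next
    case 3
    have "poly_le (int d1 + int d2 - 1) (\<lambda>x. Pr j p q x - (if j = 0 then p x * q x else 0))"
      using p1 3 unfolding P1_def by blast
    then show ?thesis by (rule poly_le_mono[rotated]) (use 3 in linarith)
  qed
qed

lemma Pol_Pr: assumes "Pol p" "Pol q" "0 < j" shows "Pol (Pr j p q)"
proof -
  obtain n m :: nat where "poly_le (int n) p" "poly_le (int m) q" using assms Pol_nat by blast
  from P1_poly[OF this, of j] assms(3) show ?thesis unfolding Pol_def by auto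
qed

lemma Pol_Pr_coord: assumes "Pol p" shows "Pol (Pr j p (\<lambda>x. x$i))"
proof (cases "j = 0")
  case True
  have "Pr 0 p (\<lambda>x. x$i) = (\<lambda>x. x$i * p x)"
    using pr0[OF Pol_smooth[OF assms] poly_le_smooth[OF poly_le_coord]] by (simp add: mult.commute)
  then show ?thesis using True Pol_coord_mult[OF assms] by simp
next
  case False
  then show ?thesis using Pol_Pr[OF assms _] poly_le_coord Pol_def by blast
qed

lemma unit_right: "Pol p \<Longrightarrow> Pr k p (\<lambda>x. 1) = (if k = 0 then p else (\<lambda>x. 0))"
proof (induction k arbitrary: p rule: less_induct)
  case (less k)
  let ?one = "\<lambda>x::real^'n. 1::real"
  have s1: "smooth ?one" using Pol_smooth Pol_const by blast
  have sp_: "smooth p" using less Pol_smooth by blast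
  show ?case
  proof (cases k)
    case 0 then show ?thesis using pr0[OF sp_ s1] by simp
  next
    case (Suc k')
    have oo: "Pr l ?one ?one = sq ?one l" for l
    proof (cases "l = 0")
      case True then show ?thesis using pr0[OF s1 s1] by (simp add: sq_def)
    next
      case False
      have "poly_le (int 0 + int 0 - 1) (\<lambda>x. Pr l ?one ?one x - (if l = 0 then 1 * 1 else 0))"
        by (rule P1_poly) (simp_all add: poly_le_const)
      hence "poly_le (-1) (\<lambda>x. Pr l ?one ?one x)" using False by simp
      hence "(\<lambda>x. Pr l ?one ?one x) = (\<lambda>x. 0)" by (rule poly_le_neg[rotated]) simp
      then show ?thesis using False by (simp add: sq_def)
    qed
    have Pl: "Pol (Pr l p ?one)" for l
      by (cases "l = 0") (use pr0[OF sp_ s1] less.prems Pol_Pr Pol_const in auto)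
    have a: "star Pr (star Pr (sq p) (sq ?one)) (sq ?one) = star Pr (sq p) (star Pr (sq ?one) (sq ?one))"
      by (rule assoc) (auto intro: smooth_sq sp_ s1)
    have e1: "star Pr (sq p) (sq ?one) = (\<lambda>l. Pr l p ?one)" by (rule star_sq_sq[OF bd sp_ s1])
    have e2: "star Pr (sq ?one) (sq ?one) = sq ?one" using star_sq_sq[OF bd s1 s1] oo by (simp add: fun_eq_iff)
    have "Pr k p ?one x = 0" for x
    proof -
      have "star Pr (\<lambda>l. Pr l p ?one) (sq ?one) k x = star Pr (sq p) (sq ?one) k x"
        using a unfolding e1 e2 by simp
      also have "\<dots> = Pr k p ?one x" using e1 by simp
      finally have A: "star Pr (\<lambda>l. Pr l p ?one) (sq ?one) k x = Pr k p ?one x" .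
      have "star Pr (\<lambda>l. Pr l p ?one) (sq ?one) k x = (\<Sum>i\<le>k. Pr i (Pr (k - i) p ?one) ?one x)"
        by (rule star_sq_right[OF bd s1]) (rule Pol_smooth[OF Pl])
      also have "\<dots> = Pr 0 (Pr k p ?one) ?one x + (\<Sum>i\<le>k'. Pr (Suc i) (Pr (k - Suc i) p ?one) ?one x)"
        unfolding Suc by (subst sum.atMost_Suc_shift) simp
      also have "(\<Sum>i\<le>k'. Pr (Suc i) (Pr (k - Suc i) p ?one) ?one x) = (\<Sum>i\<le>k'. if i = k' then Pr k p ?one x else 0)"
      proof (rule sum.cong[OF refl])
        fix i assume i: "i \<in> {..k'}"
        have "Pr (k - Suc i) p ?one = (if k - Suc i = 0 then p else (\<lambda>x. 0))"
          using less.IH[of "k - Suc i" p] less.prems Suc by simp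
        then show "Pr (Suc i) (Pr (k - Suc i) p ?one) ?one x = (if i = k' then Pr k p ?one x else 0)"
          using i Suc bidiff_zero_left[OF bd s1] by auto
      qed
      also have "\<dots> = Pr k p ?one x" by simp
      also have "Pr 0 (Pr k p ?one) ?one x = Pr k p ?one x"
        using pr0[OF Pol_smooth[OF Pl] s1] by simp
      finally have B: "star Pr (\<lambda>l. Pr l p ?one) (sq ?one) k x = Pr k p ?one x + Pr k p ?one x" .
      show ?thesis using A B by simp
    qed
    then show ?thesis using Suc by (simp add: fun_eq_iff)
  qed
qed

lemma const_right: "Pol p \<Longrightarrow> Pr k p (\<lambda>x. a) = (\<lambda>x. a * (if k = 0 then p x else 0))"
proof
  fix x assume p: "Pol p"
  have s1: "smooth (\<lambda>x::real^'n. 1::real)" using Pol_smooth Pol_const by blast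
  have "Pr k p (\<lambda>x. a * 1 + 0 * 1) x = a * Pr k p (\<lambda>x. 1) x + 0 * Pr k p (\<lambda>x. 1) x"
    by (rule bidiff_lin_right[OF bd s1 s1 Pol_smooth[OF p]])
  then show "Pr k p (\<lambda>x. a) x = a * (if k = 0 then p x else 0)" using unit_right[OF p, of k] by simp
qed

end


context
  fixes c and Pr :: "nat \<Rightarrow> (real^'n::finite \<Rightarrow> real) \<Rightarrow> (real^'n \<Rightarrow> real) \<Rightarrow> real^'n \<Rightarrow> real"
  assumes sp: "star_product c Pr" and p1: "P1 Pr"
begin

lemma Pol_Pr_coord_left: assumes "Pol g" shows "Pol (Pr j (\<lambda>x. x$i) g)"
proof (cases "j = 0")
  case True
  have "Pr 0 (\<lambda>x. x$i) g = (\<lambda>x. x$i * g x)"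
    using pr0[OF sp p1 poly_le_smooth[OF poly_le_coord] Pol_smooth[OF assms]] by simp
  then show ?thesis using True Pol_coord_mult[OF assms] by simp
next
  case False
  then show ?thesis using Pol_Pr[OF sp p1 _ assms] poly_le_coord Pol_def by blast
qed

lemma recur:
  assumes p: "Pol p" and g: "Pol g"
  shows "Pr k p (\<lambda>x. x$i * g x) x =
    (\<Sum>l\<le>k. Pr l (Pr (k - l) p (\<lambda>x. x$i)) g x) - (\<Sum>l<k. Pr l p (Pr (k - l) (\<lambda>x. x$i) g) x)"
proof -
  let ?Y = "\<lambda>x::real^'n. x$i"
  have sY: "smooth ?Y" using poly_le_smooth[OF poly_le_coord] .
  have spp: "smooth p" "smooth g" using p g Pol_smooth by blast+
  have bd': "\<And>j. bidiff (Pr j)" using bd[OF sp p1] .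
  have a: "star Pr (star Pr (sq p) (sq ?Y)) (sq g) = star Pr (sq p) (star Pr (sq ?Y) (sq g))"
    by (rule assoc[OF sp p1]) (auto intro: smooth_sq spp sY)
  have e1: "star Pr (sq p) (sq ?Y) = (\<lambda>l. Pr l p ?Y)" by (rule star_sq_sq[OF bd' spp(1) sY])
  have e2: "star Pr (sq ?Y) (sq g) = (\<lambda>l. Pr l ?Y g)" by (rule star_sq_sq[OF bd' sY spp(2)])
  have L: "star Pr (\<lambda>l. Pr l p ?Y) (sq g) k x = (\<Sum>l\<le>k. Pr l (Pr (k - l) p ?Y) g x)"
    by (rule star_sq_right[OF bd' spp(2)]) (rule Pol_smooth[OF Pol_Pr_coord[OF sp p1 p]])
  have R: "star Pr (sq p) (\<lambda>l. Pr l ?Y g) k x = (\<Sum>l\<le>k. Pr l p (Pr (k - l) ?Y g) x)"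
    by (rule star_sq_left[OF bd' spp(1)]) (rule Pol_smooth[OF Pol_Pr_coord_left[OF g]])
  have "(\<Sum>l\<le>k. Pr l p (Pr (k - l) ?Y g) x) = (\<Sum>l<k. Pr l p (Pr (k - l) ?Y g) x) + Pr k p (Pr 0 ?Y g) x"
    by (simp add: lessThan_Suc_atMost[symmetric])
  moreover have "Pr 0 ?Y g = (\<lambda>x. x$i * g x)" using pr0[OF sp p1 sY spp(2)] .
  moreover have "star Pr (\<lambda>l. Pr l p ?Y) (sq g) k x = star Pr (sq p) (\<lambda>l. Pr l ?Y g) k x"
    using a unfolding e1 e2 by simp
  ultimately show ?thesis using L R by simp
qed

end

lemma determined:
  fixes Pr Pr' :: "nat \<Rightarrow> (real^'n::finite \<Rightarrow> real) \<Rightarrow> (real^'n \<Rightarrow> real) \<Rightarrow> real^'n \<Rightarrow> real"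
  assumes sp: "star_product c Pr" and p1: "P1 Pr" and sp': "star_product c Pr'" and p1': "P1 Pr'"
    and span: "\<And>i j p. Pol p \<Longrightarrow> Pr j p (\<lambda>x. x$i) = Pr' j p (\<lambda>x. x$i)"
  shows "poly_le (int m) q \<Longrightarrow> Pol p \<Longrightarrow> Pr k p q = Pr' k p q"
proof (induction m arbitrary: q p k)
  case 0
  obtain a where q: "q = (\<lambda>x. a)" using poly_le_0 0 by auto
  show ?case unfolding q using const_right[OF sp p1 0(2)] const_right[OF sp' p1' 0(2)] by simp
next
  case (Suc m)
  obtain co where q: "q = (\<lambda>x. \<Sum>\<alpha>\<in>Ak (int (Suc m)). co \<alpha> * mon \<alpha> x)"
    using Suc.prems(1) unfolding poly_le_alt by blast
  have claim: "Pr k p (mon \<alpha>) = Pr' k p (mon \<alpha>)" if \<alpha>: "\<alpha> \<in> Ak (int (Suc m))" and p: "Pol p" for \<alpha> p k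
  proof (cases "(\<Sum>i\<in>UNIV. \<alpha> i) \<le> m")
    case True
    have "poly_le (int m) (mon \<alpha>)" by (rule poly_le_mono[OF _ poly_le_mon]) (use True in \<open>simp del: of_nat_sum\<close>)
    then show ?thesis using Suc.IH p by blast
  next
    case False
    have sa: "(\<Sum>i\<in>UNIV. \<alpha> i) = Suc m" using False \<alpha> unfolding Ak_def by (simp del: of_nat_sum)
    obtain i where ai: "\<alpha> i > 0"
    proof (rule ccontr)
      assume "\<not> thesis"
      hence "\<forall>i. \<alpha> i = 0" using that by auto
      thus False using sa by simp
    qed
    define \<beta> where "\<beta> = \<alpha>(i := \<alpha> i - 1)"
    have ab: "\<beta>(i := \<beta> i + 1) = \<alpha>" unfolding \<beta>_def using ai by (auto simp: fun_eq_iff)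
    have sb: "(\<Sum>i\<in>UNIV. \<beta> i) = m"
    proof -
      have "(\<Sum>i\<in>UNIV. \<alpha> i) = \<alpha> i + (\<Sum>j\<in>UNIV-{i}. \<alpha> j)" by (simp add: sum.remove)
      moreover have "(\<Sum>i\<in>UNIV. \<beta> i) = \<beta> i + (\<Sum>j\<in>UNIV-{i}. \<beta> j)" by (simp add: sum.remove)
      moreover have "(\<Sum>j\<in>UNIV-{i}. \<beta> j) = (\<Sum>j\<in>UNIV-{i}. \<alpha> j)" by (rule sum.cong) (auto simp: \<beta>_def)
      ultimately show ?thesis using sa ai by (simp add: \<beta>_def)
    qed
    have mb: "poly_le (int m) (mon \<beta>)" using poly_le_mon[of \<beta>] sb by simp
    have Pb: "Pol (mon \<beta>)" by (rule Pol_mon)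
    have ma: "mon \<alpha> = (\<lambda>x. x$i * mon \<beta> x)"
    proof
      fix x show "mon \<alpha> x = x$i * mon \<beta> x" using mon_shift[of \<beta> i x] unfolding ab .
    qed
    let ?Y = "\<lambda>x::real^'n. x$i"
    have PY: "Pol ?Y" using poly_le_coord Pol_def by blast
    show ?thesis
    proof
      fix x
      have s1: "(\<Sum>l\<le>k. Pr l (Pr (k - l) p ?Y) (mon \<beta>) x) = (\<Sum>l\<le>k. Pr' l (Pr' (k - l) p ?Y) (mon \<beta>) x)"
      proof (rule sum.cong[OF refl])
        fix l
        have "Pr (k - l) p ?Y = Pr' (k - l) p ?Y" by (rule span[OF p])
        moreover have "Pol (Pr (k - l) p ?Y)" by (rule Pol_Pr_coord[OF sp p1 p])
        ultimately show "Pr l (Pr (k - l) p ?Y) (mon \<beta>) x = Pr' l (Pr' (k - l) p ?Y) (mon \<beta>) x"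
          using Suc.IH[OF mb] by metis
      qed
      have s2: "(\<Sum>l<k. Pr l p (Pr (k - l) ?Y (mon \<beta>)) x) = (\<Sum>l<k. Pr' l p (Pr' (k - l) ?Y (mon \<beta>)) x)"
      proof (rule sum.cong[OF refl])
        fix l assume l: "l \<in> {..<k}"
        have e: "Pr (k - l) ?Y (mon \<beta>) = Pr' (k - l) ?Y (mon \<beta>)" by (rule Suc.IH[OF mb PY])
        have "poly_le (int 1 + int m - 1) (\<lambda>x. Pr (k - l) ?Y (mon \<beta>) x - (if k - l = 0 then x$i * mon \<beta> x else 0))"
          by (rule P1_poly[OF sp p1]) (use poly_le_coord mb in simp_all)
        hence "poly_le (int m) (Pr (k - l) ?Y (mon \<beta>))" using l by simp
        then show "Pr l p (Pr (k - l) ?Y (mon \<beta>)) x = Pr' l p (Pr' (k - l) ?Y (mon \<beta>)) x"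
          using Suc.IH p e by metis
      qed
      show "Pr k p (mon \<alpha>) x = Pr' k p (mon \<alpha>) x"
        unfolding ma recur[OF sp p1 p Pb] recur[OF sp' p1' p Pb] s1 s2 ..
    qed
  qed
  have sm: "\<And>\<alpha>. smooth (mon \<alpha>)" by (rule smooth_mon)
  have pp: "smooth p" using Suc.prems(2) Pol_smooth by blast
  show ?case
  proof
    fix x
    have "Pr k p q x = (\<Sum>\<alpha>\<in>Ak (int (Suc m)). co \<alpha> * Pr k p (mon \<alpha>) x)"
      unfolding q by (rule bidiff_sum_right[OF bd[OF sp p1] pp finite_Ak sm])
    also have "\<dots> = (\<Sum>\<alpha>\<in>Ak (int (Suc m)). co \<alpha> * Pr' k p (mon \<alpha>) x)"
      using claim Suc.prems(2) by (intro sum.cong refl) simp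
    also have "\<dots> = Pr' k p q x"
      unfolding q by (rule bidiff_sum_right[OF bd[OF sp' p1'] pp finite_Ak sm, symmetric])
    finally show "Pr k p q x = Pr' k p q x" .
  qed
qed

theorem theorem2p1p3:
  fixes c :: "'n::finite \<Rightarrow> 'n \<Rightarrow> 'n \<Rightarrow> real"
    and Pr Pr' :: "nat \<Rightarrow> (real^'n \<Rightarrow> real) \<Rightarrow> (real^'n \<Rightarrow> real) \<Rightarrow> real^'n \<Rightarrow> real"
  assumes "lie_structure c"
    and "star_product c Pr" and "P1 Pr"
    and "star_product c Pr'" and "P1 Pr'"
    and "\<forall>X Y :: real^'n. \<forall>n j.
           Pr j (\<lambda>x. (X \<bullet> x) ^ n) (\<lambda>x. Y \<bullet> x) = Pr' j (\<lambda>x. (X \<bullet> x) ^ n) (\<lambda>x. Y \<bullet> x)"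
  shows "\<forall>j a b. smooth a \<longrightarrow> smooth b \<longrightarrow> Pr j a b = Pr' j a b"
proof -
  note sp = assms(2) and p1 = assms(3) and sp' = assms(4) and p1' = assms(5)
  have span: "Pr j p (\<lambda>x. x$i) = Pr' j p (\<lambda>x. x$i)" if p: "Pol p" for i j p
  proof
    fix x0
    let ?Y = "\<lambda>x::real^'n. x$i"
    have sY: "smooth ?Y" using poly_le_smooth[OF poly_le_coord] .
    have Yax: "(\<lambda>x. axis i (1::real) \<bullet> x) = ?Y" by (simp add: inner_axis' fun_eq_iff)
    define D where "D = (\<lambda>f. Pr j f ?Y x0 - Pr' j f ?Y x0)"
    have lin: "D (\<lambda>x. a * f x + b * g x) = a * D f + b * D g" if "smooth f" "smooth g" for f g a b
      unfolding D_def using bidiff_lin_left[OF bd[OF sp p1] that sY] bidiff_lin_left[OF bd[OF sp' p1'] that sY]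
      by (simp add: algebra_simps)
    have pw: "D (\<lambda>x. (X \<bullet> x) ^ n) = 0" for X :: "real^'n" and n
    proof -
      have h: "Pr j (\<lambda>x. (X \<bullet> x) ^ n) (\<lambda>x. axis i 1 \<bullet> x) = Pr' j (\<lambda>x. (X \<bullet> x) ^ n) (\<lambda>x. axis i 1 \<bullet> x)"
        using assms(6) by blast
      show ?thesis unfolding D_def using h[unfolded Yax] by simp
    qed
    have "D p = 0" by (rule powers_span_Pol[of D, OF _ _ p], fact lin, fact pw)
    thus "Pr j p ?Y x0 = Pr' j p ?Y x0" unfolding D_def by simp
  qed
  show ?thesis
  proof (intro allI impI)
    fix j and a b :: "real^'n \<Rightarrow> real" assume a: "smooth a" and b: "smooth b"
    show "Pr j a b = Pr' j a b"
    proof (rule bidiff_agree[OF bd[OF sp p1] bd[OF sp' p1'] _ a b])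
      fix p q :: "real^'n \<Rightarrow> real" assume p: "Pol p" and q: "Pol q"
      obtain n :: nat where "poly_le (int n) q" using Pol_nat[OF q] by blast
      then show "Pr j p q = Pr' j p q" using determined[OF sp p1 sp' p1' span] p by blast
    qed
  qed
qed

end
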